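(* (1) Suppose $\frac{\psi(x)}{\sqrt x}$ is increasing on $(0,1)$, $\psi_1(x):=\frac{\psi(x)}{x}$ is decreasing on $(0,1)$, and the halving property holds: (H) there exists $K>1$ such that $\psi_1(Kx)\le\frac12\psi_1(x)$ for all $x\in(0,1/K]$. Then there exist $0<c<C$ such that for all $\delta\in(0,\delta_0]$ and $(x_N,x_T)\in\mathbb C^2$ with $x_N\ne0$, $|x_T|\le|x_N|$, \[ c\,F_3\!\left(\delta,\left|\frac{x_T}{x_N}\right|\right)|x_N|\le\kappa_{G_\psi}(p_\delta;(x_N,x_T))\le C\,F_3\!\left(\delta,\left|\frac{x_T}{x_N}\right|\right)|x_N|, \] where $F_3(\delta,t):=\min\left(\frac{\sqrt{\psi^{-1}(\delta)}}{\delta},\ \frac{8t}{\sqrt{\psi_1^{-1}(\frac{1}{8t})}}\right)$. (2) Let $\psi(x)=x$. Then there exist $0<c<C$ such that for all $\delta\in(0,\delta_0]$ and all $(x_N,x_T)\in\mathbb C^2$, \[ c\max\left(\frac{|x_N|-|x_T|}{\sqrt\delta},|x_T|\right)\le\kappa_{G_\psi}(p_\delta;(x_N,x_T))\le C\max\left(\frac{|x_N|-|x_T|}{\sqrt\delta},|x_T|\right). \] (3) If $\frac{\psi(x)}{x}$ is increasing on $(0,1)$, there exists $C>0$ such that if $0<\delta<\psi(1)$ (with $\delta\le\delta_0$) and $|x_T|\le\frac{\psi^{-1}(\delta)}{8\delta}|x_N|$, then \[ \frac{1}{4\sqrt2}\frac{\sqrt{\psi^{-1}(\delta)}}{\delta}|x_N|\le\kappa_{G_\psi}(p_\delta;(x_N,x_T))\le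 C\frac{\sqrt{\psi^{-1}(\delta)}}{\delta}|x_N|. \]
   Context: $\mathbb D$ is the unit disc in $\mathbb C$. $\psi:[0,1]\to[0,\infty)$ is continuous with $\psi(0)=0$, $\psi(1)>0$, and $G_\psi:=\{z\in\mathbb D^2:\Re z_1<\psi(|z_2|)\}$. For $\delta\in(0,1)$, $p_\delta:=(-\delta,0)$. Standing assumption: $\delta\in(0,\delta_0]$ for a fixed $\delta_0<1$; all constants depend only on $\psi$ and $\delta_0$. $\psi^{-1}$ and $\psi_1^{-1}$ denote the inverse functions of $\psi$ and $\psi_1$ (assumed well defined at the arguments used). The Kobayashi–Royden metric of a domain $\Omega\subset\mathbb C^d$ is $\kappa_\Omega(z;X)=\inf\{\lambda^{-1}:\lambda>0,\ \exists\varphi:\mathbb D\to\Omega \text{ holomorphic},\ \varphi(0)=z,\ \varphi'(0)=\lambda X\}$. *)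

theory Defs
  imports "HOL-Analysis.Analysis"
begin

text \<open>Kobayashi--Royden metric of a domain in C^2 (C^2 modelled as complex \<times> complex).
  A map phi from the unit disc is holomorphic iff both coordinate functions are.\<close>
definition kobayashi :: "(complex \<times> complex) set \<Rightarrow> complex \<times> complex \<Rightarrow> complex \<times> complex \<Rightarrow> real" where
  "kobayashi \<Omega> z X = Inf {1 / r | r. r > 0 \<and>
     (\<exists>\<phi> :: complex \<Rightarrow> complex \<times> complex.
        (\<lambda>w. fst (\<phi> w)) holomorphic_on ball 0 1 \<and>
        (\<lambda>w. snd (\<phi> w)) holomorphic_on ball 0 1 \<and>
        \<phi> ` ball 0 1 \<subseteq> \<Omega> \<and> \<phi> 0 = z \<and>
        deriv (\<lambda>w. fst (\<phi> w)) 0 = complex_of_real r * fst X \<and>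
        deriv (\<lambda>w. snd (\<phi> w)) 0 = complex_of_real r * snd X)}"

definition Gpsi :: "(real \<Rightarrow> real) \<Rightarrow> (complex \<times> complex) set" where
  "Gpsi \<psi> = {z. norm (fst z) < 1 \<and> norm (snd z) < 1 \<and> Re (fst z) < \<psi> (norm (snd z))}"

definition pdelta :: "real \<Rightarrow> complex \<times> complex" where
  "pdelta \<delta> = (complex_of_real (- \<delta>), 0)"

definition psi_inv :: "(real \<Rightarrow> real) \<Rightarrow> real \<Rightarrow> real" where
  "psi_inv \<psi> y = (THE x. x \<in> {0..1} \<and> \<psi> x = y)"

definition psi1_inv :: "(real \<Rightarrow> real) \<Rightarrow> real \<Rightarrow> real" where
  "psi1_inv \<psi> y = (THE x. x \<in> {0<..1} \<and> \<psi> x / x = y)"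

definition F3 :: "(real \<Rightarrow> real) \<Rightarrow> real \<Rightarrow> real \<Rightarrow> real" where
  "F3 \<psi> \<delta> t = min (sqrt (psi_inv \<psi> \<delta>) / \<delta>) (8 * t / sqrt (psi1_inv \<psi> (1 / (8 * t))))"

end

theory Submission
  imports Defs "HOL-Complex_Analysis.Complex_Analysis"
begin

lemma harnack_deriv:
  fixes f :: "complex \<Rightarrow> complex"
  assumes hol: "f holomorphic_on ball 0 1" and rho: "0 < \<rho>" "\<rho> \<le> 1"
    and bd: "\<And>z. norm z < \<rho> \<Longrightarrow> Re (f z) < M"
  shows "norm (deriv f 0) \<le> 2 * (M - Re (f 0)) / \<rho>"
proof -
  define A where "A = M - Re (f 0)"
  have A: "A > 0" using bd[of 0] rho by (simp add: A_def)
  define W where "W w = f (of_real \<rho> * w) - f 0" for w :: complex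
  define g where "g w = W w / (of_real (2*A) - W w)" for w :: complex
  have inball: "of_real \<rho> * w \<in> ball 0 1" if "norm w < 1" for w :: complex
  proof -
    have "norm (of_real \<rho> * w) = \<rho> * norm w" using rho by (simp add: norm_mult)
    also have "\<dots> < 1" using rho that
      by (metis dual_order.strict_trans1 mult_left_le_one_le norm_ge_zero less_eq_real_def mult_strict_left_mono mult.right_neutral)
    finally show ?thesis by simp
  qed
  have lt: "norm (of_real \<rho> * w) < \<rho>" if "norm w < 1" for w :: complex
    using rho that by (simp add: norm_mult)
  have reW: "Re (W w) < A" if "norm w < 1" for w :: complex
    using bd[OF lt[OF that]] by (simp add: W_def A_def)
  have den: "Re (of_real (2*A) - W w) > 0" if "norm w < 1" for w :: complex
    using reW[OF that] A by simp
  have den0: "of_real (2*A) - W w \<noteq> 0" if "norm w < 1" for w :: complex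
    using den[OF that] by (metis order_less_irrefl zero_complex.sel(1))
  have holW: "W holomorphic_on ball 0 1"
  proof -
    have sub: "(\<lambda>w::complex. of_real \<rho> * w) ` ball 0 1 \<subseteq> ball 0 1" using inball by (auto simp: dist_norm)
    have "(\<lambda>w. f (of_real \<rho> * w)) holomorphic_on ball 0 1"
      using holomorphic_on_compose_gen[of "\<lambda>w. of_real \<rho> * w" "ball 0 1" f "ball 0 1", OF _ hol sub]
      by (auto simp: o_def intro!: holomorphic_intros)
    then show ?thesis unfolding W_def by (intro holomorphic_intros)
  qed
  have holg: "g holomorphic_on ball 0 1"
    unfolding g_def using holW den0 by (intro holomorphic_intros) auto
  have g0: "g 0 = 0" by (simp add: g_def W_def)
  have gn: "norm (g w) < 1" if "norm w < 1" for w :: complex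
  proof -
    have "norm (W w) < norm (of_real (2*A) - W w)"
    proof -
      have "(norm (W w))^2 = (Re (W w))^2 + (Im (W w))^2" by (simp add: cmod_power2)
      moreover have "(norm (of_real (2*A) - W w))^2 = (2*A - Re (W w))^2 + (Im (W w))^2"
        by (simp add: cmod_power2)
      moreover have "(Re (W w))^2 < (2*A - Re (W w))^2"
        using reW[OF that] A by (simp add: power2_eq_square algebra_simps)
      ultimately have "(norm (W w))^2 < (norm (of_real (2*A) - W w))^2" by linarith
      then show ?thesis by (meson norm_ge_zero power_less_imp_less_base)
    qed
    then show ?thesis using den0[OF that] by (simp add: g_def norm_divide divide_less_eq)
  qed
  have dW: "(W has_field_derivative (of_real \<rho> * deriv f 0)) (at 0)"
  proof -
    have "(f has_field_derivative deriv f 0) (at (of_real \<rho> * 0))"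
      using hol by (auto intro!: holomorphic_derivI)
    then have "((\<lambda>w. f (of_real \<rho> * w)) has_field_derivative (deriv f 0 * of_real \<rho>)) (at 0)"
      using DERIV_chain2[of f "deriv f 0" "\<lambda>w. of_real \<rho> * w" 0 "of_real \<rho>"]
      by (auto intro!: derivative_eq_intros)
    then show ?thesis unfolding W_def by (auto intro!: derivative_eq_intros simp: mult.commute)
  qed
  have W0: "W 0 = 0" by (simp add: W_def)
  have dg: "(g has_field_derivative (of_real \<rho> * deriv f 0 / of_real (2*A))) (at 0)"
  proof -
    have dd: "((\<lambda>w. of_real (2*A) - W w) has_field_derivative (0 - of_real \<rho> * deriv f 0)) (at 0)"
      by (intro derivative_intros dW)
    have "((\<lambda>w. W w / (of_real (2*A) - W w)) has_field_derivative
       ((of_real \<rho> * deriv f 0) * (of_real (2*A) - W 0) - W 0 * (0 - of_real \<rho> * deriv f 0)) / ((of_real (2*A) - W 0) * (of_real (2*A) - W 0))) (at 0)"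
      by (rule DERIV_divide[OF dW dd]) (use A W0 in simp)
    moreover have "complex_of_real A \<noteq> 0" using A by simp
    ultimately show ?thesis unfolding g_def by (simp add: W0 field_simps)
  qed
  then have "deriv g 0 = of_real \<rho> * deriv f 0 / of_real (2*A)" by (rule DERIV_imp_deriv)
  moreover have "norm (deriv g 0) \<le> 1"
    using Schwarz_Lemma(2)[OF holg g0 gn, of 0] by simp
  ultimately have "\<rho> * norm (deriv f 0) / (2*A) \<le> 1"
    using rho A by (simp add: norm_mult norm_divide)
  then show ?thesis using rho A by (simp add: A_def field_simps)
qed

lemma schwarz_le:
  fixes f :: "complex \<Rightarrow> complex"
  assumes hol: "f holomorphic_on ball 0 1" and f0: "f 0 = 0"
    and bd: "\<And>z. norm z < 1 \<Longrightarrow> norm (f z) \<le> 1" and z: "norm z < 1"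
  shows "norm (f z) \<le> norm z"
proof (rule field_le_mult_one_interval)
  fix c :: real assume c: "0 < c" "c < 1"
  have "norm ((\<lambda>z. of_real c * f z) z) \<le> norm z"
  proof (rule Schwarz_Lemma(1))
    show "(\<lambda>z. of_real c * f z) holomorphic_on ball 0 1" using hol by (intro holomorphic_intros) auto
    show "of_real c * f 0 = 0" using f0 by simp
    show "norm z < 1" by (rule z)
    fix w :: complex assume "norm w < 1"
    then have "norm (f w) \<le> 1" by (rule bd)
    then have "c * norm (f w) \<le> c" using c by (simp add: mult_left_le)
    moreover have "norm (of_real c * f w) = c * norm (f w)" using c by (simp add: norm_mult)
    ultimately show "norm (of_real c * f w) < 1" using c by linarith
  qed
  then show "c * norm (f z) \<le> norm z" using c by (simp add: norm_mult)
qed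

lemma schwarz_factor:
  fixes f :: "complex \<Rightarrow> complex"
  assumes hol: "f holomorphic_on ball 0 1" and f0: "f 0 = 0"
    and bd: "\<And>z. norm z < 1 \<Longrightarrow> norm (f z) < 1"
  obtains h where "h holomorphic_on ball 0 1" "\<And>z. norm z < 1 \<Longrightarrow> f z = z * h z"
    "h 0 = deriv f 0" "\<And>z. norm z < 1 \<Longrightarrow> norm (h z) \<le> 1"
proof -
  obtain h where h: "h holomorphic_on ball 0 1" "\<And>z. norm z < 1 \<Longrightarrow> f z = z * h z" "deriv f 0 = h 0"
    using Schwarz3[OF hol, of ] f0 by metis
  have "norm (h z) \<le> 1" if z: "norm z < 1" for z
  proof (cases "z = 0")
    case True
    then show ?thesis using Schwarz_Lemma(2)[OF hol f0 bd, of 0] h(3) by simp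
  next
    case False
    have "norm (z * h z) \<le> norm z" using Schwarz_Lemma(1)[OF hol f0 bd z] h(2)[OF z] by simp
    then show ?thesis using False by (simp add: norm_mult)
  qed
  then show ?thesis using that h by metis
qed

lemma disc_identity:
  fixes a H :: complex
  shows "(cmod (1 - cnj a * H))^2 - (cmod (H - a))^2 = (1 - (cmod a)^2) * (1 - (cmod H)^2)"
  unfolding cmod_power2 by (simp add: power2_eq_square algebra_simps)

lemma schwarz_pick_bound:
  fixes f :: "complex \<Rightarrow> complex"
  assumes hol: "f holomorphic_on ball 0 1" and f0: "f 0 = 0"
    and bd: "\<And>z. norm z < 1 \<Longrightarrow> norm (f z) < 1" and z: "norm z < 1"
  shows "norm (f z) \<le> norm z * (norm z + norm (deriv f 0))"
proof -
  obtain h where h: "h holomorphic_on ball 0 1" "\<And>z. norm z < 1 \<Longrightarrow> f z = z * h z"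
    "h 0 = deriv f 0" "\<And>z. norm z < 1 \<Longrightarrow> norm (h z) \<le> 1"
    using schwarz_factor[OF hol f0 bd] by metis
  define a where "a = h 0"
  define b where "b = norm a"
  define \<rho> where "\<rho> = norm z"
  have fz: "norm (f z) = \<rho> * norm (h z)" using h(2)[OF z] by (simp add: norm_mult \<rho>_def)
  have hz1: "norm (h z) \<le> 1" using h(4)[OF z] .
  have b0: "b \<ge> 0" and r0: "\<rho> \<ge> 0" by (auto simp: b_def \<rho>_def)
  have "norm (h z) \<le> b + \<rho>"
  proof (cases "b + \<rho> \<ge> 1 \<or> \<rho> = 0")
    case True
    moreover have "\<rho> = 0 \<Longrightarrow> z = 0" by (simp add: \<rho>_def)
    ultimately show ?thesis using hz1 b0 by (auto simp: a_def b_def)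
  next
    case False
    have b1: "b < 1" and r1: "\<rho> < 1" and rpos: "\<rho> > 0" using False b0 r0 by linarith+
    have nden: "norm (cnj a * h w) < 1" if "norm w < 1" for w
    proof -
      have "norm (cnj a * h w) = b * norm (h w)" by (simp add: norm_mult b_def)
      also have "\<dots> \<le> b" using h(4)[OF that] b0 by (simp add: mult_left_le)
      finally show ?thesis using b1 by simp
    qed
    have den0: "1 - cnj a * h w \<noteq> 0" if "norm w < 1" for w
      using nden[OF that] by auto
    define k where "k w = (h w - a) / (1 - cnj a * h w)" for w
    have holk: "k holomorphic_on ball 0 1"
      unfolding k_def using h(1) den0 by (intro holomorphic_intros) auto
    have k0: "k 0 = 0" by (simp add: k_def a_def)
    have kb: "norm (k w) \<le> 1" if w: "norm w < 1" for w
    proof -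
      have hw: "norm (h w) \<le> 1" using h(4)[OF w] .
      have "(cmod a)^2 \<le> 1" "(cmod (h w))^2 \<le> 1"
        using b1 b0 hw by (auto simp: b_def power_le_one)
      then have "(1 - (cmod a)^2) * (1 - (cmod (h w))^2) \<ge> 0" by simp
      then have "(cmod (h w - a))^2 \<le> (cmod (1 - cnj a * h w))^2"
        using disc_identity[of a "h w"] by linarith
      then have "cmod (h w - a) \<le> cmod (1 - cnj a * h w)"
        by (rule power2_le_imp_le) simp
      then show ?thesis using den0[OF w] by (simp add: k_def norm_divide divide_le_eq_1)
    qed
    have "norm (k z) \<le> \<rho>" using schwarz_le[OF holk k0 kb z] by (simp add: \<rho>_def)
    then have kz: "cmod (h z - a) \<le> \<rho> * cmod (1 - cnj a * h z)"
      using den0[OF z] by (simp add: k_def norm_divide divide_le_eq)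
    define x where "x = norm (h z)"
    define P where "P = Re (cnj a * h z)"
    have x0: "x \<ge> 0" by (simp add: x_def)
    have Pb: "P \<le> b * x"
      using complex_Re_le_cmod[of "cnj a * h z"] by (simp add: P_def b_def x_def norm_mult)
    have e1: "(cmod (h z - a))^2 = x^2 - 2*P + b^2"
      unfolding cmod_power2 x_def P_def b_def by (simp add: power2_eq_square algebra_simps)
    have e2: "(cmod (1 - cnj a * h z))^2 = 1 - 2*P + b^2 * x^2"
      unfolding cmod_power2 x_def P_def b_def by (simp add: power2_eq_square algebra_simps)
    have "(cmod (h z - a))^2 \<le> (\<rho> * cmod (1 - cnj a * h z))^2"
      by (rule power_mono[OF kz]) simp
    then have ineq: "x^2 - 2*P + b^2 \<le> \<rho>^2 * (1 - 2*P + b^2 * x^2)"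
      using e1 e2 by (simp add: power_mult_distrib)
    show ?thesis
    proof (rule ccontr)
      assume "\<not> norm (h z) \<le> b + \<rho>"
      then have xg: "x > b + \<rho>" by (simp add: x_def)
      have "b*\<rho> \<le> b" using b0 r1 by (intro mult_left_le) auto
      then have br: "b*\<rho> < 1" using b1 by linarith
      have "b*b \<le> b" using b0 b1 by (intro mult_left_le) auto
      then have bb: "b*b < 1" using b1 by linarith
      have f1: "(1 + b*\<rho>) * x - (b + \<rho>) > 0"
      proof -
        have "b*\<rho>*x \<ge> 0" using b0 r0 x0 by (simp add: mult_nonneg_nonneg)
        then have "(1 + b*\<rho>) * x \<ge> x" by (simp add: algebra_simps)
        then show ?thesis using xg by linarith
      qed
      have f2: "(1 - b*\<rho>) * x - (b - \<rho>) > 0"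
      proof -
        have "(1 - b*\<rho>) * x \<ge> (1 - b*\<rho>) * (b + \<rho>)" using xg br by (simp add: mult_left_mono)
        moreover have "(1 - b*\<rho>) * (b + \<rho>) - (b - \<rho>) = \<rho> * (2 - b*b - b*\<rho>)" by (simp add: algebra_simps)
        moreover have "\<rho> * (2 - b*b - b*\<rho>) > 0" using rpos br bb by simp
        ultimately show ?thesis by linarith
      qed
      have "((1 + b*\<rho>) * x - (b + \<rho>)) * ((1 - b*\<rho>) * x - (b - \<rho>))
          = x^2 * (1 - \<rho>^2*b^2) - 2*b*x*(1 - \<rho>^2) + b^2 - \<rho>^2"
        by (simp add: power2_eq_square algebra_simps)
      moreover have "x^2 * (1 - \<rho>^2*b^2) - 2*b*x*(1 - \<rho>^2) + b^2 - \<rho>^2 \<le> 2*P*(1-\<rho>^2) - 2*b*x*(1 - \<rho>^2)"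
        using ineq by (simp add: algebra_simps)
      moreover have "2*P*(1-\<rho>^2) \<le> 2*b*x*(1 - \<rho>^2)"
        using Pb r1 r0 by (intro mult_right_mono) (auto simp: power_le_one)
      moreover have "((1 + b*\<rho>) * x - (b + \<rho>)) * ((1 - b*\<rho>) * x - (b - \<rho>)) > 0"
        using f1 f2 by simp
      ultimately show False by linarith
    qed
  qed
  then show ?thesis using fz \<rho>_def r0 by (simp add: h(3) mult_left_mono a_def b_def)
qed

lemma second_order_bound:
  fixes f :: "complex \<Rightarrow> complex"
  assumes hol: "f holomorphic_on ball 0 1"
    and bd: "\<And>z. norm z < 1 \<Longrightarrow> norm (f z) < 1" and z: "norm z < 1"
  shows "norm (f z - f 0 - deriv f 0 * z) \<le> 4 * (norm z)^2"
proof -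
  define F where "F w = (f w - f 0) / 2" for w
  have holF: "F holomorphic_on ball 0 1" unfolding F_def using hol by (intro holomorphic_intros) auto
  have F0: "F 0 = 0" by (simp add: F_def)
  have Fb: "norm (F w) < 1" if "norm w < 1" for w
  proof -
    have "norm (f w - f 0) \<le> norm (f w) + norm (f 0)" by (rule norm_triangle_ineq4)
    also have "\<dots> < 2" using bd[OF that] bd[of 0] by simp
    finally show ?thesis by (simp add: F_def norm_divide)
  qed
  have "(F has_field_derivative (deriv f 0 / 2)) (at 0)"
  proof -
    have "(f has_field_derivative deriv f 0) (at 0)" using hol by (auto intro!: holomorphic_derivI)
    then show ?thesis unfolding F_def by (auto intro!: derivative_eq_intros)
  qed
  then have dF: "deriv F 0 = deriv f 0 / 2" by (rule DERIV_imp_deriv)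
  obtain H where H: "H holomorphic_on ball 0 1" "\<And>z. norm z < 1 \<Longrightarrow> F z = z * H z"
    "H 0 = deriv F 0" "\<And>z. norm z < 1 \<Longrightarrow> norm (H z) \<le> 1"
    using schwarz_factor[OF holF F0 Fb] by metis
  define G where "G w = (H w - H 0) / 2" for w
  have holG: "G holomorphic_on ball 0 1" unfolding G_def using H(1) by (intro holomorphic_intros) auto
  have G0: "G 0 = 0" by (simp add: G_def)
  have Gb: "norm (G w) \<le> 1" if "norm w < 1" for w
  proof -
    have "norm (H w - H 0) \<le> norm (H w) + norm (H 0)" by (rule norm_triangle_ineq4)
    also have "\<dots> \<le> 2" using H(4)[OF that] H(4)[of 0] by simp
    finally show ?thesis by (simp add: G_def norm_divide)
  qed
  have Gz: "norm (G z) \<le> norm z" by (rule schwarz_le[OF holG G0 Gb z])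
  have "f z - f 0 - deriv f 0 * z = 4 * z * G z"
    using H(2)[OF z] H(3) dF by (simp add: F_def G_def algebra_simps)
  then have "norm (f z - f 0 - deriv f 0 * z) = 4 * norm z * norm (G z)" by (simp add: norm_mult)
  also have "\<dots> \<le> 4 * norm z * norm z" using Gz by (simp add: mult_left_mono)
  finally show ?thesis by (simp add: power2_eq_square)
qed


definition adm :: "(real \<Rightarrow> real) \<Rightarrow> real \<Rightarrow> complex \<times> complex \<Rightarrow> real \<Rightarrow> (complex \<Rightarrow> complex \<times> complex) \<Rightarrow> bool" where
  "adm \<psi> \<delta> X r \<phi> \<longleftrightarrow> r > 0 \<and>
        (\<lambda>w. fst (\<phi> w)) holomorphic_on ball 0 1 \<and>
        (\<lambda>w. snd (\<phi> w)) holomorphic_on ball 0 1 \<and>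
        \<phi> ` ball 0 1 \<subseteq> Gpsi \<psi> \<and> \<phi> 0 = pdelta \<delta> \<and>
        deriv (\<lambda>w. fst (\<phi> w)) 0 = complex_of_real r * fst X \<and>
        deriv (\<lambda>w. snd (\<phi> w)) 0 = complex_of_real r * snd X"

lemma kob_eq: "kobayashi (Gpsi \<psi>) (pdelta \<delta>) X = Inf {1/r | r. \<exists>\<phi>. adm \<psi> \<delta> X r \<phi>}"
  unfolding kobayashi_def adm_def by (rule arg_cong[where f=Inf]) blast

lemma kob_upper: "adm \<psi> \<delta> X r \<phi> \<Longrightarrow> kobayashi (Gpsi \<psi>) (pdelta \<delta>) X \<le> 1/r"
  unfolding kob_eq
  by (rule cInf_lower) (auto simp: bdd_below_def adm_def intro!: exI[of _ 0])

lemma kob_lower: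
  assumes "\<exists>r \<phi>. adm \<psi> \<delta> X r \<phi>" and "\<And>r \<phi>. adm \<psi> \<delta> X r \<phi> \<Longrightarrow> L \<le> 1/r"
  shows "L \<le> kobayashi (Gpsi \<psi>) (pdelta \<delta>) X"
  unfolding kob_eq using assms by (intro cInf_greatest) auto

lemma kob_nonneg:
  assumes "\<exists>r \<phi>. adm \<psi> \<delta> X r \<phi>"
  shows "0 \<le> kobayashi (Gpsi \<psi>) (pdelta \<delta>) X"
  by (rule kob_lower[OF assms]) (simp add: adm_def)

lemma kob_le_0:
  assumes "\<And>r. r > 0 \<Longrightarrow> \<exists>\<phi>. adm \<psi> \<delta> X r \<phi>"
  shows "kobayashi (Gpsi \<psi>) (pdelta \<delta>) X \<le> 0"
proof (rule ccontr)
  let ?k = "kobayashi (Gpsi \<psi>) (pdelta \<delta>) X"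
  assume "\<not> ?k \<le> 0"
  then have k: "?k > 0" by simp
  obtain \<phi> where "adm \<psi> \<delta> X (2 / ?k) \<phi>" using assms[of "2/?k"] k by auto
  then have "?k \<le> 1 / (2 / ?k)" by (rule kob_upper)
  then show False using k by simp
qed

lemma unit_factor:
  fixes x :: complex
  obtains u where "norm u = 1" "x = of_real (norm x) * u"
proof (cases "x = 0")
  case True then show ?thesis using that[of 1] by simp
next
  case False
  have "norm (x / of_real (norm x)) = 1" using False by (simp add: norm_divide)
  moreover have "x = of_real (norm x) * (x / of_real (norm x))" using False by simp
  ultimately show ?thesis by (rule that)
qed

lemma map_adm:
  fixes \<psi> :: "real \<Rightarrow> real" and xN xT :: complex
  assumes nn: "\<And>x. 0 \<le> x \<Longrightarrow> x \<le> 1 \<Longrightarrow> \<psi> x \<ge> 0"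
    and mono: "\<And>x y. 0 \<le> x \<Longrightarrow> x \<le> y \<Longrightarrow> y \<le> 1 \<Longrightarrow> \<psi> x \<le> \<psi> y"
    and d: "\<delta> > 0" and r: "r > 0" and sq: "sq > 0"
    and c1: "\<delta> + r * norm xN < 1" and c2: "r * norm xT + sq \<le> 1"
    and cond: "\<And>v. 0 < v \<Longrightarrow> v < 1 \<Longrightarrow> r * norm xN * v - \<delta> < \<psi> (v * (r * norm xT + sq * v))"
  shows "\<exists>\<phi>. adm \<psi> \<delta> (xN, xT) r \<phi>"
proof -
  obtain u1 where u1: "norm u1 = 1" "xN = of_real (norm xN) * u1" by (rule unit_factor)
  obtain u2 where u2: "norm u2 = 1" "xT = of_real (norm xT) * u2" by (rule unit_factor)
  define n where "n = norm xN"
  define m where "m = norm xT"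
  have n0: "n \<ge> 0" and m0: "m \<ge> 0" by (auto simp: n_def m_def)
  have xNe: "xN = of_real n * u1" using u1(2) n_def by simp
  have xTe: "xT = of_real m * u2" using u2(2) m_def by simp
  define \<phi> where "\<phi> w = (of_real (- \<delta>) + of_real r * xN * w, of_real r * xT * w + of_real sq * u1 * u2 * w^2)" for w :: complex
  have f1: "(\<lambda>w. fst (\<phi> w)) = (\<lambda>w. of_real (- \<delta>) + of_real r * xN * w)" by (simp add: \<phi>_def)
  have f2: "(\<lambda>w. snd (\<phi> w)) = (\<lambda>w. of_real r * xT * w + of_real sq * u1 * u2 * w^2)" by (simp add: \<phi>_def)
  have hol1: "(\<lambda>w. fst (\<phi> w)) holomorphic_on ball 0 1" unfolding f1 by (intro holomorphic_intros)
  have hol2: "(\<lambda>w. snd (\<phi> w)) holomorphic_on ball 0 1" unfolding f2 by (intro holomorphic_intros)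
  have "((\<lambda>w. of_real (- \<delta>) + of_real r * xN * w) has_field_derivative (of_real r * xN)) (at 0)"
    by (auto intro!: derivative_eq_intros)
  then have d1: "deriv (\<lambda>w. fst (\<phi> w)) 0 = of_real r * xN" unfolding f1 by (rule DERIV_imp_deriv)
  have "((\<lambda>w. of_real r * xT * w + of_real sq * u1 * u2 * w^2) has_field_derivative (of_real r * xT)) (at 0)"
    by (auto intro!: derivative_eq_intros)
  then have d2: "deriv (\<lambda>w. snd (\<phi> w)) 0 = of_real r * xT" unfolding f2 by (rule DERIV_imp_deriv)
  have p0: "\<phi> 0 = pdelta \<delta>" by (simp add: \<phi>_def pdelta_def)
  have img: "\<phi> w \<in> Gpsi \<psi>" if w: "norm w < 1" for w
  proof -
    define p where "p = Re (u1 * w)"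
    have nw: "norm (u1 * w) = norm w" using u1 by (simp add: norm_mult)
    have pw: "p \<le> norm w" using complex_Re_le_cmod[of "u1*w"] nw by (simp add: p_def)
    have e1: "fst (\<phi> w) = of_real (- \<delta>) + of_real (r * n) * (u1 * w)"
      by (simp add: \<phi>_def xNe algebra_simps)
    have e2: "snd (\<phi> w) = u2 * w * (of_real (r * m) + of_real sq * (u1 * w))"
      by (simp add: \<phi>_def xTe algebra_simps power2_eq_square)
    have re1: "Re (fst (\<phi> w)) = - \<delta> + r * n * p" by (simp add: e1 p_def)
    have n1: "norm (fst (\<phi> w)) < 1"
    proof -
      have "norm (fst (\<phi> w)) \<le> \<delta> + r * n * norm w"
        unfolding e1 using d r n0 u1(1) by (rule_tac order_trans[OF norm_triangle_ineq]) (simp add: norm_mult)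
      also have "\<dots> \<le> \<delta> + r * n" using r n0 w by (simp add: mult_left_le)
      finally show ?thesis using c1 by (simp add: n_def)
    qed
    have ns: "norm (snd (\<phi> w)) = norm w * norm (of_real (r * m) + of_real sq * (u1 * w))"
      unfolding e2 using u2 by (simp add: norm_mult)
    have n2: "norm (snd (\<phi> w)) < 1"
    proof -
      have "norm (of_real (r * m) + of_real sq * (u1 * w)) \<le> r * m + sq * norm w"
        using r m0 sq u1(1) by (rule_tac order_trans[OF norm_triangle_ineq]) (simp add: norm_mult)
      also have "\<dots> \<le> 1" using c2 sq w by (simp add: m_def) (smt (verit) mult_left_le norm_ge_zero)
      finally have "norm (snd (\<phi> w)) \<le> norm w" unfolding ns by (simp add: mult_left_le)
      then show ?thesis using w by simp
    qed
    have ns2: "norm (snd (\<phi> w)) \<ge> norm w * (r * m + sq * p)"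
    proof -
      have "r * m + sq * p = Re (of_real (r * m) + of_real sq * (u1 * w))" by (simp add: p_def)
      also have "\<dots> \<le> norm (of_real (r * m) + of_real sq * (u1 * w))" by (rule complex_Re_le_cmod)
      finally show ?thesis unfolding ns by (simp add: mult_left_mono)
    qed
    have "Re (fst (\<phi> w)) < \<psi> (norm (snd (\<phi> w)))"
    proof (cases "p \<le> 0")
      case True
      then have "Re (fst (\<phi> w)) < 0" unfolding re1 using d r n0
        by (smt (verit) mult_nonneg_nonpos mult_nonneg_nonneg)
      also have "0 \<le> \<psi> (norm (snd (\<phi> w)))" using nn n2 by simp
      finally show ?thesis .
    next
      case False
      then have pp: "p > 0" by simp
      have pl: "p < 1" using pw w by simp
      have X0: "0 \<le> p * (r * m + sq * p)" using pp r m0 sq by simp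
      have "p * (r * m + sq * p) \<le> norm w * (r * m + sq * p)"
        using pw pp r m0 sq by (intro mult_right_mono) auto
      also have "\<dots> \<le> norm (snd (\<phi> w))" by (rule ns2)
      finally have Xle: "p * (r * m + sq * p) \<le> norm (snd (\<phi> w))" .
      have "Re (fst (\<phi> w)) = r * norm xN * p - \<delta>" by (simp add: re1 n_def)
      also have "\<dots> < \<psi> (p * (r * norm xT + sq * p))" by (rule cond[OF pp pl])
      also have "\<dots> \<le> \<psi> (norm (snd (\<phi> w)))" using mono[OF X0 Xle] n2 by (simp add: m_def)
      finally show ?thesis .
    qed
    then show ?thesis using n1 n2 by (simp add: Gpsi_def)
  qed
  have "adm \<psi> \<delta> (xN, xT) r \<phi>"
    unfolding adm_def using r hol1 hol2 d1 d2 p0 img by auto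
  then show ?thesis by blast
qed


lemma adm_facts:
  assumes "adm \<psi> \<delta> (xN, xT) r \<phi>"
  shows "r > 0" "(\<lambda>w. fst (\<phi> w)) holomorphic_on ball 0 1" "(\<lambda>w. snd (\<phi> w)) holomorphic_on ball 0 1"
    "fst (\<phi> 0) = - of_real \<delta>" "snd (\<phi> 0) = 0"
    "\<And>w. norm w < 1 \<Longrightarrow> norm (fst (\<phi> w)) < 1"
    "\<And>w. norm w < 1 \<Longrightarrow> norm (snd (\<phi> w)) < 1"
    "\<And>w. norm w < 1 \<Longrightarrow> Re (fst (\<phi> w)) < \<psi> (norm (snd (\<phi> w)))"
    "deriv (\<lambda>w. fst (\<phi> w)) 0 = of_real r * xN"
    "deriv (\<lambda>w. snd (\<phi> w)) 0 = of_real r * xT"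
proof -
  have sub: "\<phi> ` ball 0 1 \<subseteq> Gpsi \<psi>" using assms by (simp add: adm_def)
  show "r > 0" "(\<lambda>w. fst (\<phi> w)) holomorphic_on ball 0 1" "(\<lambda>w. snd (\<phi> w)) holomorphic_on ball 0 1"
    "deriv (\<lambda>w. fst (\<phi> w)) 0 = of_real r * xN"
    "deriv (\<lambda>w. snd (\<phi> w)) 0 = of_real r * xT" using assms by (auto simp: adm_def)
  show "fst (\<phi> 0) = - of_real \<delta>" "snd (\<phi> 0) = 0" using assms by (auto simp: adm_def pdelta_def)
  fix w :: complex assume "norm w < 1"
  then have "\<phi> w \<in> Gpsi \<psi>" using sub by auto
  then show "norm (fst (\<phi> w)) < 1" "norm (snd (\<phi> w)) < 1" "Re (fst (\<phi> w)) < \<psi> (norm (snd (\<phi> w)))"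
    by (auto simp: Gpsi_def)
qed

lemma adm_L1:
  assumes "adm \<psi> \<delta> (xN, xT) r \<phi>"
  shows "r * norm xT \<le> 1"
proof -
  note F = adm_facts[OF assms]
  have "norm (deriv (\<lambda>w. snd (\<phi> w)) 0) \<le> 1"
    by (rule Schwarz_Lemma(2)[OF F(3) F(5) F(7), of 0]) auto
  then show ?thesis using F(1) F(10) by (simp add: norm_mult)
qed

lemma adm_phi2_bound:
  assumes "adm \<psi> \<delta> (xN, xT) r \<phi>" and z: "norm z < 1"
  shows "norm (snd (\<phi> z)) \<le> norm z * (norm z + r * norm xT)"
proof -
  note F = adm_facts[OF assms(1)]
  have "norm (snd (\<phi> z)) \<le> norm z * (norm z + norm (deriv (\<lambda>w. snd (\<phi> w)) 0))"
    by (rule schwarz_pick_bound[where f="\<lambda>w. snd (\<phi> w)", OF F(3) F(5) F(7) z]) auto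
  then show ?thesis using F(1) F(10) by (simp add: norm_mult)
qed

lemma adm_L2:
  assumes A: "adm \<psi> \<delta> (xN, xT) r \<phi>"
    and mono: "\<And>x y. 0 \<le> x \<Longrightarrow> x \<le> y \<Longrightarrow> y \<le> 1 \<Longrightarrow> \<psi> x \<le> \<psi> y"
    and rho: "0 < \<rho>" "\<rho> < 1" and le1: "\<rho> * (\<rho> + r * norm xT) \<le> 1"
  shows "r * norm xN \<le> 2 * (\<psi> (\<rho> * (\<rho> + r * norm xT)) + \<delta>) / \<rho>"
proof -
  note F = adm_facts[OF A]
  have bd: "Re (fst (\<phi> z)) < \<psi> (\<rho> * (\<rho> + r * norm xT))" if z: "norm z < \<rho>" for z
  proof -
    have z1: "norm z < 1" using z rho by simp
    have "norm (snd (\<phi> z)) \<le> norm z * (norm z + r * norm xT)" by (rule adm_phi2_bound[OF A z1])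
    also have "\<dots> \<le> \<rho> * (\<rho> + r * norm xT)"
      using z F(1) rho by (intro mult_mono add_right_mono) auto
    finally have "norm (snd (\<phi> z)) \<le> \<rho> * (\<rho> + r * norm xT)" .
    then have "\<psi> (norm (snd (\<phi> z))) \<le> \<psi> (\<rho> * (\<rho> + r * norm xT))"
      using mono le1 by simp
    then show ?thesis using F(8)[OF z1] by linarith
  qed
  have "norm (deriv (\<lambda>w. fst (\<phi> w)) 0) \<le> 2 * (\<psi> (\<rho> * (\<rho> + r * norm xT)) - Re (fst (\<phi> 0))) / \<rho>"
    by (rule harnack_deriv[where f="\<lambda>w. fst (\<phi> w)", OF F(2) rho(1) _ bd]) (use rho in auto)
  then show ?thesis using F(1) F(9) F(4) by (simp add: norm_mult)
qed

lemma adm_L3: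
  assumes A: "adm (\<lambda>x. x) \<delta> (xN, xT) r \<phi>"
    and rho: "0 < \<rho>" "\<rho> < 1"
  shows "r * norm xN * \<rho> - \<delta> - 4 * \<rho>^2 < \<rho> * (\<rho> + r * norm xT)"
proof -
  note F = adm_facts[OF A]
  obtain u1 where u1: "norm u1 = 1" "xN = of_real (norm xN) * u1" by (rule unit_factor)
  define z where "z = of_real \<rho> * cnj u1"
  have nz: "norm z = \<rho>" using u1 rho by (simp add: z_def norm_mult)
  have z1: "norm z < 1" using nz rho by simp
  have uu: "u1 * cnj u1 = 1" using u1(1) by (metis complex_norm_square mult.commute of_real_1 power_one)
  have lin: "deriv (\<lambda>w. fst (\<phi> w)) 0 * z = of_real (r * norm xN * \<rho>)"
  proof -
    have "deriv (\<lambda>w. fst (\<phi> w)) 0 * z = of_real (r * norm xN * \<rho>) * (u1 * cnj u1)"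
      by (subst F(9), subst u1(2)) (simp add: z_def algebra_simps)
    then show ?thesis using uu by simp
  qed
  have "norm (fst (\<phi> z) - fst (\<phi> 0) - deriv (\<lambda>w. fst (\<phi> w)) 0 * z) \<le> 4 * (norm z)^2"
    by (rule second_order_bound[where f="\<lambda>w. fst (\<phi> w)", OF F(2) F(6) z1])
  then have E: "norm (fst (\<phi> z) + of_real \<delta> - of_real (r * norm xN * \<rho>)) \<le> 4 * \<rho>^2"
    using F(4) lin nz by simp
  have "- Re (fst (\<phi> z) + of_real \<delta> - of_real (r * norm xN * \<rho>)) \<le> 4 * \<rho>^2"
    using E abs_Re_le_cmod[of "fst (\<phi> z) + of_real \<delta> - of_real (r * norm xN * \<rho>)"] by linarith
  then have "r * norm xN * \<rho> - \<delta> - 4 * \<rho>^2 \<le> Re (fst (\<phi> z))" by simp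
  also have "\<dots> < norm (snd (\<phi> z))" using F(8)[OF z1] by simp
  also have "\<dots> \<le> \<rho> * (\<rho> + r * norm xT)" using adm_phi2_bound[OF A z1] nz by simp
  finally show ?thesis .
qed


lemma sqrt_amgm: "0 \<le> d \<Longrightarrow> sqrt d * v \<le> (d + v^2) / 2"
proof -
  assume d: "0 \<le> d"
  have "0 \<le> (sqrt d - v)^2" by simp
  moreover have "(sqrt d - v)^2 = d - 2 * sqrt d * v + v^2" using d by (simp add: power2_eq_square algebra_simps)
  ultimately show ?thesis by simp
qed

lemma part2:
  fixes \<delta>0 :: real
  assumes d0: "0 < \<delta>0" "\<delta>0 < 1"
  shows "\<exists>c C. 0 < c \<and> c < C \<and>
       (\<forall>\<delta> xN xT. 0 < \<delta> \<and> \<delta> \<le> \<delta>0 \<longrightarrow>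
          c * max ((norm xN - norm xT) / sqrt \<delta>) (norm xT) \<le> kobayashi (Gpsi (\<lambda>x. x)) (pdelta \<delta>) (xN, xT)
          \<and> kobayashi (Gpsi (\<lambda>x. x)) (pdelta \<delta>) (xN, xT) \<le> C * max ((norm xN - norm xT) / sqrt \<delta>) (norm xT))"
proof (rule exI[of _ "1/7"], rule exI[of _ "6 / (1 - \<delta>0)"], intro conjI allI impI)
  show "0 < (1/7::real)" by simp
  show "1/7 < 6 / (1 - \<delta>0)" using d0 by (simp add: field_simps)
  fix \<delta> :: real and xN xT :: complex
  assume "0 < \<delta> \<and> \<delta> \<le> \<delta>0"
  then have d: "0 < \<delta>" "\<delta> \<le> \<delta>0" by auto
  define n where "n = norm xN"
  define m where "m = norm xT"
  define E where "E = max ((n - m) / sqrt \<delta>) m"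
  have n0: "n \<ge> 0" and m0: "m \<ge> 0" by (auto simp: n_def m_def)
  have E0: "E \<ge> 0" using m0 by (simp add: E_def)
  have sd: "0 < sqrt \<delta>" "sqrt \<delta> < 1" using d d0 by auto
  have nmE: "n - m \<le> sqrt \<delta> * E"
  proof -
    have "(n - m) / sqrt \<delta> \<le> E" by (simp add: E_def)
    then show ?thesis using sd(1) by (simp add: pos_divide_le_eq mult.commute)
  qed
  have mE: "m \<le> E" by (simp add: E_def)
  have nn: "\<And>x::real. 0 \<le> x \<Longrightarrow> x \<le> 1 \<Longrightarrow> x \<ge> 0" and mono: "\<And>x y::real. 0 \<le> x \<Longrightarrow> x \<le> y \<Longrightarrow> y \<le> 1 \<Longrightarrow> x \<le> y"
    by auto
  have d1: "\<delta> < 1" using d d0 by simp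
  have mapr: "\<exists>\<phi>. adm (\<lambda>x. x) \<delta> (xN, xT) r \<phi>"
    if r: "r > 0" "r * n \<le> (1 - \<delta>0) / 2" "r * m \<le> 1/2" "r * (n - m) \<le> sqrt \<delta>" for r
  proof (rule map_adm[OF nn mono d(1) r(1), where sq="1/2" and \<psi>="\<lambda>x. x"])
    show "(0::real) < 1/2" by simp
    show "\<delta> + r * norm xN < 1" using r(2) d d0 by (simp add: n_def)
    show "r * norm xT + 1/2 \<le> 1" using r(3) by (simp add: m_def)
    fix v :: real assume v: "0 < v" "v < 1"
    have "r * (n - m) * v \<le> sqrt \<delta> * v" using r(4) v by (simp add: mult_right_mono)
    also have "\<dots> \<le> (\<delta> + v^2) / 2" using d by (intro sqrt_amgm) simp
    finally have "r * (n - m) * v < \<delta> + v^2 / 2" using d by simp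
    then show "r * norm xN * v - \<delta> < v * (r * norm xT + 1/2 * v)"
      by (simp add: n_def m_def algebra_simps power2_eq_square)
  qed
  have upper: "kobayashi (Gpsi (\<lambda>x. x)) (pdelta \<delta>) (xN, xT) \<le> 6 / (1 - \<delta>0) * E"
    and ne: "\<exists>r \<phi>. adm (\<lambda>x. x) \<delta> (xN, xT) r \<phi>"
  proof -
    have "kobayashi (Gpsi (\<lambda>x. x)) (pdelta \<delta>) (xN, xT) \<le> 6 / (1 - \<delta>0) * E \<and> (\<exists>r \<phi>. adm (\<lambda>x. x) \<delta> (xN, xT) r \<phi>)"
    proof (cases "E = 0")
      case True
      then have "m = 0" using mE m0 by simp
      moreover have "n - m \<le> 0" using nmE True by simp
      ultimately have nm: "n = 0" "m = 0" using n0 by auto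
      have all: "\<exists>\<phi>. adm (\<lambda>x. x) \<delta> (xN, xT) r \<phi>" if "r > 0" for r
        by (rule mapr) (use that d0 sd in \<open>auto simp: nm\<close>)
      have "kobayashi (Gpsi (\<lambda>x. x)) (pdelta \<delta>) (xN, xT) \<le> 0" by (rule kob_le_0[OF all])
      then show ?thesis using True all[of 1] by auto
    next
      case False
      then have Ep: "E > 0" using E0 by simp
      define r where "r = (1 - \<delta>0) / (6 * E)"
      have rp: "r > 0" using Ep d0 by (simp add: r_def)
      have nE: "n \<le> 2 * E"
      proof -
        have "sqrt \<delta> * E \<le> E" using sd E0 by (simp add: mult_left_le_one_le)
        then show ?thesis using nmE mE by linarith
      qed
      have r1: "r * n \<le> (1 - \<delta>0) / 2"
      proof -
        have "r * n \<le> r * (2 * E)" using nE rp by (simp add: mult_left_mono)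
        also have "\<dots> = (1 - \<delta>0) / 3" using Ep by (simp add: r_def)
        finally show ?thesis using d0 by simp
      qed
      have r2: "r * m \<le> 1/2"
      proof -
        have "r * m \<le> r * E" using mE rp by (simp add: mult_left_mono)
        also have "\<dots> = (1 - \<delta>0) / 6" using Ep by (simp add: r_def)
        finally show ?thesis using d0 by simp
      qed
      have r3: "r * (n - m) \<le> sqrt \<delta>"
      proof -
        have "r * (n - m) \<le> r * (sqrt \<delta> * E)" using nmE rp by (simp add: mult_left_mono)
        also have "\<dots> = sqrt \<delta> * ((1 - \<delta>0) / 6)" using Ep by (simp add: r_def)
        also have "\<dots> \<le> sqrt \<delta>" using sd d0 by (simp add: mult_left_le)
        finally show ?thesis .
      qed
      obtain \<phi> where ph: "adm (\<lambda>x. x) \<delta> (xN, xT) r \<phi>" using mapr[OF rp r1 r2 r3] by blast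
      have "kobayashi (Gpsi (\<lambda>x. x)) (pdelta \<delta>) (xN, xT) \<le> 1 / r" by (rule kob_upper[OF ph])
      also have "1 / r = 6 / (1 - \<delta>0) * E" using Ep d0 by (simp add: r_def)
      finally show ?thesis using ph by blast
    qed
    then show "kobayashi (Gpsi (\<lambda>x. x)) (pdelta \<delta>) (xN, xT) \<le> 6 / (1 - \<delta>0) * E"
      "\<exists>r \<phi>. adm (\<lambda>x. x) \<delta> (xN, xT) r \<phi>" by auto
  qed
  have lower: "1/7 * E \<le> kobayashi (Gpsi (\<lambda>x. x)) (pdelta \<delta>) (xN, xT)"
  proof (rule kob_lower[OF ne])
    fix r \<phi> assume A: "adm (\<lambda>x. x) \<delta> (xN, xT) r \<phi>"
    have rp: "r > 0" using A by (simp add: adm_def)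
    have L1: "r * m \<le> 1" using adm_L1[OF A] by (simp add: m_def)
    have L3: "r * n * sqrt \<delta> - \<delta> - 4 * (sqrt \<delta>)^2 < sqrt \<delta> * (sqrt \<delta> + r * m)"
      using adm_L3[OF A sd] by (simp add: n_def m_def)
    have "r * (n - m) * sqrt \<delta> < 6 * \<delta>"
      using L3 d by (simp add: algebra_simps power2_eq_square)
    moreover have "6 * \<delta> = (6 * sqrt \<delta>) * sqrt \<delta>" using d by simp
    ultimately have "r * (n - m) * sqrt \<delta> < (6 * sqrt \<delta>) * sqrt \<delta>" by simp
    then have "r * (n - m) < 6 * sqrt \<delta>" by (rule mult_right_less_imp_less) (use sd in simp)
    then have a1: "r * ((n - m) / sqrt \<delta>) < 6" using sd(1) by (simp add: pos_divide_less_eq mult.commute mult.left_commute)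
    have "E = (n - m) / sqrt \<delta> \<or> E = m" by (auto simp: E_def max_def)
    then have "r * E \<le> 7" using a1 L1 by auto
    then show "1/7 * E \<le> 1 / r" using rp by (simp add: field_simps)
  qed
  show "1/7 * max ((norm xN - norm xT) / sqrt \<delta>) (norm xT) \<le> kobayashi (Gpsi (\<lambda>x. x)) (pdelta \<delta>) (xN, xT)"
    using lower by (simp add: E_def n_def m_def)
  show "kobayashi (Gpsi (\<lambda>x. x)) (pdelta \<delta>) (xN, xT) \<le> 6 / (1 - \<delta>0) * max ((norm xN - norm xT) / sqrt \<delta>) (norm xT)"
    using upper by (simp add: E_def n_def m_def)
qed


lemma endpt_ge:
  fixes f :: "real \<Rightarrow> real"
  assumes "continuous_on {a..1} f" "a < 1" "\<And>y. a < y \<Longrightarrow> y < 1 \<Longrightarrow> c \<le> f y"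
  shows "c \<le> f 1"
  using continuous_ge_on_closure[of "{a<..<1}" f 1 c] assms by auto

lemma endpt_le:
  fixes f :: "real \<Rightarrow> real"
  assumes "continuous_on {a..1} f" "a < 1" "\<And>y. a < y \<Longrightarrow> y < 1 \<Longrightarrow> f y \<le> c"
  shows "f 1 \<le> c"
  using continuous_le_on_closure[of "{a<..<1}" f 1 c] assms by auto

lemma cont_quot:
  fixes \<psi> g :: "real \<Rightarrow> real"
  assumes cont: "continuous_on {0..1} \<psi>" and a: "0 < a" and g: "continuous_on {a..1} g" "\<And>y. a \<le> y \<Longrightarrow> g y \<noteq> 0"
  shows "continuous_on {a..1} (\<lambda>y. \<psi> y / g y)"
proof -
  have "continuous_on {a..1} \<psi>" by (rule continuous_on_subset[OF cont]) (use a in auto)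
  then show ?thesis using g by (intro continuous_intros) auto
qed

lemma psi_inv_prop:
  fixes \<psi> :: "real \<Rightarrow> real"
  assumes cont: "continuous_on {0..1} \<psi>" and psi0: "\<psi> 0 = 0" and d: "0 < \<delta>" "\<delta> \<le> \<psi> 1"
    and U: "\<And>x y. x \<in> {0..1} \<Longrightarrow> y \<in> {0..1} \<Longrightarrow> \<psi> x = \<delta> \<Longrightarrow> \<psi> y = \<delta> \<Longrightarrow> x = y"
  shows "0 < psi_inv \<psi> \<delta>" "psi_inv \<psi> \<delta> \<le> 1" "\<psi> (psi_inv \<psi> \<delta>) = \<delta>"
proof -
  obtain x where x: "0 \<le> x" "x \<le> 1" "\<psi> x = \<delta>"
    using IVT'[of \<psi> 0 \<delta> 1] cont psi0 d by auto
  have "psi_inv \<psi> \<delta> = x"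
    unfolding psi_inv_def by (rule the_equality) (use x U in auto)
  moreover have "x \<noteq> 0" using x psi0 d by auto
  ultimately show "0 < psi_inv \<psi> \<delta>" "psi_inv \<psi> \<delta> \<le> 1" "\<psi> (psi_inv \<psi> \<delta>) = \<delta>" using x by auto
qed


lemma part3:
  fixes \<psi> :: "real \<Rightarrow> real" and \<delta>0 :: real
  assumes cont: "continuous_on {0..1} \<psi>"
    and nonneg: "\<forall>x\<in>{0..1}. \<psi> x \<ge> 0"
    and psi0: "\<psi> 0 = 0"
    and psi1: "\<psi> 1 > 0"
    and d0: "0 < \<delta>0" "\<delta>0 < 1"
    and M3: "mono_on {0<..<1} (\<lambda>x. \<psi> x / x)"
  shows "\<exists>C>0. \<forall>\<delta> xN xT. 0 < \<delta> \<and> \<delta> < \<psi> 1 \<and> \<delta> \<le> \<delta>0 \<and>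
            norm xT \<le> psi_inv \<psi> \<delta> / (8 * \<delta>) * norm xN
          \<longrightarrow> 1 / (4 * sqrt 2) * (sqrt (psi_inv \<psi> \<delta>) / \<delta>) * norm xN \<le> kobayashi (Gpsi \<psi>) (pdelta \<delta>) (xN, xT)
            \<and> kobayashi (Gpsi \<psi>) (pdelta \<delta>) (xN, xT) \<le> C * (sqrt (psi_inv \<psi> \<delta>) / \<delta>) * norm xN"
proof -
  have nn: "\<And>x. 0 \<le> x \<Longrightarrow> x \<le> 1 \<Longrightarrow> \<psi> x \<ge> 0" using nonneg by auto
  have q1: "\<psi> x / x \<le> \<psi> y / y" if "0 < x" "x \<le> y" "y \<le> 1" for x y
  proof (cases "y < 1")
    case True then show ?thesis using mono_onD[OF M3, of x y] that by auto
  next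
    case False
    then have y1: "y = 1" using that by simp
    show ?thesis
    proof (cases "x = 1")
      case True then show ?thesis using y1 by simp
    next
      case False
      then have x1: "x < 1" using that y1 by simp
      have cq: "continuous_on {x..1} (\<lambda>y. \<psi> y / y)"
        by (rule cont_quot[OF cont that(1)]) (use that(1) in \<open>auto intro!: continuous_intros\<close>)
      have "\<psi> x / x \<le> \<psi> 1 / 1"
      proof (rule endpt_ge[OF cq x1])
        fix y assume "x < y" "y < 1"
        then show "\<psi> x / x \<le> \<psi> y / y" using mono_onD[OF M3, of x y] that(1) x1 by auto
      qed
      then show ?thesis using y1 by simp
    qed
  qed
  have mono: "\<psi> x \<le> \<psi> y" if "0 \<le> x" "x \<le> y" "y \<le> 1" for x y
  proof (cases "x = 0")
    case True then show ?thesis using psi0 nn that by simp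
  next
    case False
    then have xp: "x > 0" using that by simp
    have yp: "y > 0" using xp that by simp
    have "\<psi> x / x \<le> \<psi> y / y" by (rule q1) (use xp that in auto)
    moreover have "\<psi> x / x \<ge> 0" using nn[of x] xp that by simp
    ultimately have "x * (\<psi> x / x) \<le> y * (\<psi> y / y)" using that by (intro mult_mono) auto
    then show ?thesis using xp yp by simp
  qed
  have q1b: "\<psi> x / x \<le> \<psi> 1" if "0 < x" "x \<le> 1" for x using q1[OF that order_refl] by simp
  have inv: "0 < psi_inv \<psi> \<delta> \<and> psi_inv \<psi> \<delta> < 1 \<and> \<psi> (psi_inv \<psi> \<delta>) = \<delta>" if d: "0 < \<delta>" "\<delta> < \<psi> 1" for \<delta>
  proof -
    have U: "x = y" if "x \<in> {0..1}" "y \<in> {0..1}" "\<psi> x = \<delta>" "\<psi> y = \<delta>" for x y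
    proof (rule ccontr)
      assume "x \<noteq> y"
      have pos: "z > 0" if "z \<in> {0..1}" "\<psi> z = \<delta>" for z
      proof -
        have "z \<noteq> 0" using that(2) psi0 d(1) by auto
        then show ?thesis using that(1) by simp
      qed
      have key: False if "a < b" "a \<in> {0..1}" "b \<in> {0..1}" "\<psi> a = \<delta>" "\<psi> b = \<delta>" for a b
      proof -
        have ap: "a > 0" using pos that by blast
        have "\<psi> a / a \<le> \<psi> b / b" by (rule q1) (use ap that in auto)
        then have "\<psi> a \<le> (\<psi> b / b) * a" using ap by (simp add: pos_divide_le_eq)
        also have "\<dots> < (\<psi> b / b) * b" using that ap d by (intro mult_strict_left_mono) auto
        also have "\<dots> = \<psi> b" using that ap by simp
        finally show False using that by simp
      qed
      have "x < y \<or> y < x" using \<open>x \<noteq> y\<close> by linarith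
      then show False using key[of x y] key[of y x] that by blast
    qed
    note P = psi_inv_prop[OF cont psi0 d(1) less_imp_le[OF d(2)] U]
    have p3: "\<psi> (psi_inv \<psi> \<delta>) = \<delta>" by (rule P(3))
    have "psi_inv \<psi> \<delta> \<noteq> 1"
    proof
      assume "psi_inv \<psi> \<delta> = 1"
      then have "\<psi> 1 = \<delta>" using p3 by simp
      then show False using d(2) by simp
    qed
    then have "psi_inv \<psi> \<delta> < 1" using P(2) by linarith
    then show ?thesis using P(1) p3 by blast
  qed
  define c1 where "c1 = min (1/2) ((1 - \<delta>0) / (2 * \<psi> 1 + 1))"
  have c1p: "c1 > 0" using d0 psi1 by (simp add: c1_def)
  have c1h: "c1 \<le> 1/2" unfolding c1_def by (rule min.cobounded1)
  have c1b: "c1 * \<psi> 1 < (1 - \<delta>0) / 2"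
  proof -
    have "c1 * \<psi> 1 \<le> (1 - \<delta>0) / (2 * \<psi> 1 + 1) * \<psi> 1"
      using psi1 by (intro mult_right_mono) (auto simp: c1_def)
    also have "\<dots> < (1 - \<delta>0) / 2" using psi1 d0 by (simp add: field_simps)
    finally show ?thesis .
  qed
  show ?thesis
  proof (intro exI[of _ "1/c1"] conjI allI impI)
    show "0 < 1/c1" using c1p by simp
    fix \<delta> :: real and xN xT :: complex
    assume H: "0 < \<delta> \<and> \<delta> < \<psi> 1 \<and> \<delta> \<le> \<delta>0 \<and> norm xT \<le> psi_inv \<psi> \<delta> / (8 * \<delta>) * norm xN"
    then have d: "0 < \<delta>" "\<delta> < \<psi> 1" "\<delta> \<le> \<delta>0" and mH: "norm xT \<le> psi_inv \<psi> \<delta> / (8 * \<delta>) * norm xN" by auto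
    define x where "x = psi_inv \<psi> \<delta>"
    have x: "0 < x" "x < 1" "\<psi> x = \<delta>" using inv[OF d(1,2)] by (auto simp: x_def)
    define q where "q = sqrt x"
    have q: "0 < q" "q < 1" "q * q = x" using x by (auto simp: q_def)
    define n where "n = norm xN"
    define m where "m = norm xT"
    have n0: "n \<ge> 0" and m0: "m \<ge> 0" by (auto simp: n_def m_def)
    have mn: "m \<le> x / (8 * \<delta>) * n" using mH by (simp add: m_def n_def x_def)
    have below: "\<psi> y < \<delta>" if "0 < y" "y < x" for y
    proof -
      have "\<psi> y / y \<le> \<psi> x / x" by (rule q1) (use that x in auto)
      then have "\<psi> y \<le> y * (\<delta> / x)" using that x by (simp add: divide_le_eq mult.commute)
      also have "\<dots> < x * (\<delta> / x)" using that x d by (intro mult_strict_right_mono) auto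
      finally show ?thesis using x by simp
    qed
    have above: "\<psi> y \<ge> y * (\<delta> / x)" if "x \<le> y" "y \<le> 1" for y
    proof -
      have "\<psi> x / x \<le> \<psi> y / y" by (rule q1) (use that x in auto)
      then show ?thesis using that x by (simp add: le_divide_eq mult.commute)
    qed
    have dq: "\<delta> / q \<le> \<psi> 1"
    proof -
      have "\<delta> / x \<le> \<psi> 1" using q1b[of x] x by simp
      moreover have "\<delta> / q = q * (\<delta> / x)" using q by (simp add: field_simps flip: q(3))
      moreover have "q * (\<delta> / x) \<le> \<delta> / x" using q x d by (intro mult_left_le_one_le) auto
      ultimately show ?thesis by linarith
    qed
    have mapr: "\<exists>\<phi>. adm \<psi> \<delta> (xN, xT) r \<phi>"
      if r: "r > 0" "r * n \<le> c1 * \<delta> / q" "r * m \<le> 1/2" for r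
    proof (rule map_adm[OF nn mono d(1) r(1), where sq="1/2"])
      show "(0::real) < 1/2" by simp
      have "r * n \<le> c1 * (\<delta> / q)" using r(2) by simp
      also have "\<dots> \<le> c1 * \<psi> 1" using dq c1p by (intro mult_left_mono) auto
      finally show "\<delta> + r * norm xN < 1" using c1b d d0 by (simp add: n_def)
      show "r * norm xT + 1/2 \<le> 1" using r(3) by (simp add: m_def)
      fix v :: real assume v: "0 < v" "v < 1"
      define X where "X = v * (r * m + 1/2 * v)"
      have X1: "v * v / 2 \<le> X" using v r m0 by (simp add: X_def algebra_simps)
      have X2: "X \<le> 1"
      proof -
        have "X \<le> 1 * (r * m + 1/2 * 1)" unfolding X_def using v r m0 by (intro mult_mono add_left_mono) auto
        then show ?thesis using r(3) by simp
      qed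
      have rnv: "r * n * v \<le> c1 * \<delta> / q * v" using r(2) v by (intro mult_right_mono) auto
      show "r * norm xN * v - \<delta> < \<psi> (v * (r * norm xT + 1/2 * v))"
      proof (cases "v * v / 2 \<ge> x")
        case True
        have "\<psi> (v * v / 2) \<le> \<psi> X" by (rule mono) (use X1 X2 v in auto)
        moreover have "\<psi> (v * v / 2) \<ge> (v * v / 2) * (\<delta> / x)" by (rule above) (use True X1 X2 in auto)
        moreover have "c1 * \<delta> / q * v - \<delta> < (v * v / 2) * (\<delta> / x)"
        proof -
          define y where "y = v / q"
          have vy: "v = y * q" using q by (simp add: y_def)
          have "c1 * y - 1 < y * y / 2"
          proof -
            have yp: "y \<ge> 0" using q v by (simp add: y_def)
            have "c1 * y \<le> 1/2 * y" using c1h yp by (rule mult_right_mono)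
            moreover have "y / 2 - 1 < y * y / 2"
            proof -
              have "0 \<le> (y - 1) * (y - 1)" by simp
              then have "y * y - 2 * y + 1 \<ge> 0" by (simp add: algebra_simps)
              then show ?thesis using yp by linarith
            qed
            ultimately show ?thesis by linarith
          qed
          then have "\<delta> * (c1 * y - 1) < \<delta> * (y * y / 2)" using d by simp
          moreover have "c1 * \<delta> / q * v - \<delta> = \<delta> * (c1 * y - 1)" using q by (simp add: vy field_simps)
          moreover have "(v * v / 2) * (\<delta> / x) = \<delta> * (y * y / 2)" using q by (simp add: vy field_simps flip: q(3))
          ultimately show ?thesis by linarith
        qed
        ultimately show ?thesis using rnv by (simp add: X_def n_def m_def)
      next
        case False
        then have "v * v < 2 * (q * q)" using q by simp
        have "v < 2 * q"
        proof (rule ccontr)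
          assume "\<not> v < 2 * q"
          then have "(2 * q) * (2 * q) \<le> v * v" using q by (intro mult_mono) auto
          then have "4 * (q * q) \<le> v * v" by (simp add: algebra_simps)
          moreover have "q * q > 0" using q(1) by simp
          ultimately show False using \<open>v * v < 2 * (q * q)\<close> by linarith
        qed
        then have "c1 * \<delta> / q * v < c1 * \<delta> / q * (2 * q)" using c1p d q by (intro mult_strict_left_mono) auto
        also have "\<dots> = 2 * c1 * \<delta>" using q by simp
        also have "\<dots> \<le> \<delta>" using c1h d by simp
        finally have "r * n * v - \<delta> < 0" using rnv by simp
        then have neg: "r * norm xN * v - \<delta> < 0" by (simp only: n_def)
        have "0 \<le> v * v / 2" by simp
        then have "0 \<le> X" using X1 by linarith
        then have psX: "\<psi> X \<ge> 0" using X2 by (intro nn) auto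
        have "\<psi> (v * (r * norm xT + 1/2 * v)) = \<psi> X" by (simp only: X_def m_def)
        then show ?thesis using psX neg by linarith
      qed
    qed
    have zero_all: "\<exists>\<phi>. adm \<psi> \<delta> (xN, xT) r \<phi>" if "n = 0" "r > 0" for r
    proof -
      have "m = 0" using mn that n0 m0 by simp
      then show ?thesis using that c1p d q by (intro mapr) auto
    qed
    define r0 where "r0 = c1 * \<delta> / (q * n)"
    have mapr0: "\<exists>\<phi>. adm \<psi> \<delta> (xN, xT) r0 \<phi>" and r0p: "r0 > 0" if "n > 0"
    proof -
      show rp: "r0 > 0" using that c1p d q by (simp add: r0_def)
      have rn: "r0 * n = c1 * \<delta> / q" using that by (simp add: r0_def)
      have "r0 * m \<le> r0 * (x / (8 * \<delta>) * n)" using mn rp by (intro mult_left_mono) auto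
      also have "\<dots> = c1 * q / 8" using that d q by (simp add: r0_def field_simps flip: q(3))
      also have "\<dots> \<le> 1/2"
      proof -
        have "c1 * q \<le> c1" using c1p q by (intro mult_left_le) auto
        then show ?thesis using c1h by linarith
      qed
      finally show "\<exists>\<phi>. adm \<psi> \<delta> (xN, xT) r0 \<phi>" using mapr[OF rp] rn by simp
    qed
    have ne: "\<exists>r \<phi>. adm \<psi> \<delta> (xN, xT) r \<phi>"
      using zero_all[of 1] mapr0 n0 by (cases "n = 0") auto
    show "kobayashi (Gpsi \<psi>) (pdelta \<delta>) (xN, xT) \<le> 1 / c1 * (sqrt (psi_inv \<psi> \<delta>) / \<delta>) * norm xN"
    proof (cases "n = 0")
      case True
      have "kobayashi (Gpsi \<psi>) (pdelta \<delta>) (xN, xT) \<le> 0" by (rule kob_le_0[OF zero_all[OF True]])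
      then show ?thesis using True by (simp add: n_def)
    next
      case False
      then have np: "n > 0" using n0 by simp
      obtain \<phi> where "adm \<psi> \<delta> (xN, xT) r0 \<phi>" using mapr0[OF np] by blast
      then have "kobayashi (Gpsi \<psi>) (pdelta \<delta>) (xN, xT) \<le> 1 / r0" by (rule kob_upper)
      also have "1 / r0 = 1 / c1 * (sqrt (psi_inv \<psi> \<delta>) / \<delta>) * norm xN"
        using np c1p d q by (simp add: r0_def q_def x_def n_def field_simps)
      finally show ?thesis .
    qed
    show "1 / (4 * sqrt 2) * (sqrt (psi_inv \<psi> \<delta>) / \<delta>) * norm xN \<le> kobayashi (Gpsi \<psi>) (pdelta \<delta>) (xN, xT)"
    proof (rule kob_lower[OF ne])
      fix r \<phi> assume A: "adm \<psi> \<delta> (xN, xT) r \<phi>"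
      have rp: "r > 0" using A by (simp add: adm_def)
      define R where "R = r * n"
      have "R * q \<le> 4 * sqrt 2 * \<delta>"
      proof (rule ccontr)
        assume "\<not> R * q \<le> 4 * sqrt 2 * \<delta>"
        then have big: "R * q > 4 * sqrt 2 * \<delta>" by simp
        have Rp: "R > 0"
        proof (rule ccontr)
          assume "\<not> R > 0"
          then have "R * q \<le> 0" using q(1) by (simp add: mult_nonpos_nonneg)
          moreover have "4 * sqrt 2 * \<delta> > 0" using d by simp
          ultimately show False using big by linarith
        qed
        have "(4 * sqrt 2 * \<delta>)^2 < (R * q)^2" using big d by (intro power_strict_mono) auto
        then have big2: "32 * \<delta>^2 < R^2 * x" by (simp add: power_mult_distrib flip: q(3)) (simp add: power2_eq_square)
        define \<rho> where "\<rho> = 4 * \<delta> / R"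
        have rho0: "\<rho> > 0" using Rp d by (simp add: \<rho>_def)
        have rho2: "\<rho>^2 < x / 2"
        proof -
          have "\<rho>^2 = 16 * \<delta>^2 / R^2" by (simp add: \<rho>_def power_divide power_mult_distrib)
          also have "\<dots> < x / 2" using big2 Rp by (simp add: field_simps)
          finally show ?thesis .
        qed
        have rho1: "\<rho> < 1"
        proof (rule ccontr)
          assume "\<not> \<rho> < 1"
          then have "1 \<le> \<rho>^2" by (simp add: one_le_power)
          then show False using rho2 x by simp
        qed
        define b where "b = r * m"
        have "b \<le> r * (x / (8 * \<delta>) * n)" unfolding b_def using mn rp by (intro mult_left_mono) auto
        then have bR: "b \<le> R * x / (8 * \<delta>)" by (simp add: R_def field_simps)
        have "\<rho> * b \<le> \<rho> * (R * x / (8 * \<delta>))" using bR rho0 by (intro mult_left_mono) auto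
        also have "\<dots> = x / 2" using Rp d by (simp add: \<rho>_def field_simps)
        finally have rb: "\<rho> * b \<le> x / 2" .
        have Y: "\<rho> * (\<rho> + b) < x" using rho2 rb by (simp add: algebra_simps power2_eq_square)
        have b0: "b \<ge> 0" using rp m0 by (simp add: b_def)
        have Yp: "\<rho> * (\<rho> + b) > 0" using rho0 b0 by simp
        have "R \<le> 2 * (\<psi> (\<rho> * (\<rho> + b)) + \<delta>) / \<rho>"
          using adm_L2[OF A mono rho0 rho1] Y x by (simp add: R_def b_def n_def m_def)
        also have "\<dots> < 2 * (\<delta> + \<delta>) / \<rho>"
          using below[OF Yp Y] rho0 by (simp add: divide_strict_right_mono)
        also have "\<dots> = R" using Rp d by (simp add: \<rho>_def)
        finally show False by simp
      qed
      then show "1 / (4 * sqrt 2) * (sqrt (psi_inv \<psi> \<delta>) / \<delta>) * norm xN \<le> 1 / r"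
        using rp d by (simp add: R_def q_def x_def n_def field_simps)
    qed
  qed
qed


locale p1 =
  fixes \<psi> :: "real \<Rightarrow> real" and \<delta>0 K :: real
  assumes cont: "continuous_on {0..1} \<psi>"
    and nonneg: "\<forall>x\<in>{0..1}. \<psi> x \<ge> 0"
    and psi0: "\<psi> 0 = 0"
    and psi1: "\<psi> 1 > 0"
    and d0: "0 < \<delta>0" "\<delta>0 < 1"
    and G: "mono_on {0<..<1} (\<lambda>x. \<psi> x / sqrt x)"
    and Q: "antimono_on {0<..<1} (\<lambda>x. \<psi> x / x)"
    and K1: "K > 1"
    and halv: "\<forall>x\<in>{0<..1/K}. \<psi> (K * x) / (K * x) \<le> 1/2 * (\<psi> x / x)"
begin

lemma nn: "0 \<le> x \<Longrightarrow> x \<le> 1 \<Longrightarrow> \<psi> x \<ge> 0" using nonneg by auto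

lemma gmono: "0 < x \<Longrightarrow> x \<le> y \<Longrightarrow> y \<le> 1 \<Longrightarrow> \<psi> x / sqrt x \<le> \<psi> y / sqrt y"
proof -
  assume that: "0 < x" "x \<le> y" "y \<le> 1"
  show ?thesis
  proof (cases "y < 1")
    case True then show ?thesis using mono_onD[OF G, of x y] that by auto
  next
    case False
    then have y1: "y = 1" using that by simp
    show ?thesis
    proof (cases "x = 1")
      case True then show ?thesis using y1 by simp
    next
      case False
      then have x1: "x < 1" using that y1 by simp
      have cq: "continuous_on {x..1} (\<lambda>y. \<psi> y / sqrt y)"
        by (rule cont_quot[OF cont that(1)]) (use that(1) in \<open>auto intro!: continuous_intros\<close>)
      have "\<psi> x / sqrt x \<le> \<psi> 1 / sqrt 1"
      proof (rule endpt_ge[OF cq x1])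
        fix y assume "x < y" "y < 1"
        then show "\<psi> x / sqrt x \<le> \<psi> y / sqrt y" using mono_onD[OF G, of x y] that(1) x1 by auto
      qed
      then show ?thesis using y1 by simp
    qed
  qed
qed

lemma qanti: "0 < x \<Longrightarrow> x \<le> y \<Longrightarrow> y \<le> 1 \<Longrightarrow> \<psi> y / y \<le> \<psi> x / x"
proof -
  assume that: "0 < x" "x \<le> y" "y \<le> 1"
  show ?thesis
  proof (cases "y < 1")
    case True then show ?thesis using monotone_onD[OF Q, of x y] that by auto
  next
    case False
    then have y1: "y = 1" using that by simp
    show ?thesis
    proof (cases "x = 1")
      case True then show ?thesis using y1 by simp
    next
      case False
      then have x1: "x < 1" using that y1 by simp
      have cq: "continuous_on {x..1} (\<lambda>y. \<psi> y / y)"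
        by (rule cont_quot[OF cont that(1)]) (use that(1) in \<open>auto intro!: continuous_intros\<close>)
      have "\<psi> 1 / 1 \<le> \<psi> x / x"
      proof (rule endpt_le[OF cq x1])
        fix y assume "x < y" "y < 1"
        then show "\<psi> y / y \<le> \<psi> x / x" using monotone_onD[OF Q, of x y] that(1) x1 by auto
      qed
      then show ?thesis using y1 by simp
    qed
  qed
qed

lemma pos: "0 < x \<Longrightarrow> x \<le> 1 \<Longrightarrow> \<psi> x > 0"
proof -
  assume x: "0 < x" "x \<le> 1"
  have "\<psi> x \<ge> 0" using nn x by simp
  moreover have "\<psi> x \<noteq> 0"
  proof
    assume "\<psi> x = 0"
    then have "\<psi> 1 / 1 \<le> 0" using qanti[OF x(1) x(2) order_refl] by simp
    then show False using psi1 by simp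
  qed
  ultimately show ?thesis by simp
qed

lemma psi_eq_g: "0 < x \<Longrightarrow> \<psi> x = (\<psi> x / sqrt x) * sqrt x" by simp

lemma mono: "0 \<le> x \<Longrightarrow> x \<le> y \<Longrightarrow> y \<le> 1 \<Longrightarrow> \<psi> x \<le> \<psi> y"
proof -
  assume that: "0 \<le> x" "x \<le> y" "y \<le> 1"
  show ?thesis
  proof (cases "x = 0")
    case True then show ?thesis using psi0 nn that by simp
  next
    case False
    then have xp: "x > 0" using that by simp
    have yp: "y > 0" using xp that by simp
    have "\<psi> x / sqrt x \<le> \<psi> y / sqrt y" by (rule gmono) (use xp that in auto)
    moreover have "\<psi> x / sqrt x \<ge> 0" using nn[of x] xp that by simp
    ultimately have "(\<psi> x / sqrt x) * sqrt x \<le> (\<psi> y / sqrt y) * sqrt y" using that by (intro mult_mono) auto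
    then show ?thesis using xp yp by simp
  qed
qed

lemma gbound: "0 < x \<Longrightarrow> x \<le> 1 \<Longrightarrow> \<psi> x / sqrt x \<le> \<psi> 1"
  using gmono[of x 1] by simp

lemma inv:
  assumes d: "0 < \<delta>" "\<delta> \<le> \<psi> 1"
  shows "0 < psi_inv \<psi> \<delta> \<and> psi_inv \<psi> \<delta> \<le> 1 \<and> \<psi> (psi_inv \<psi> \<delta>) = \<delta>"
proof -
  have U: "x = y" if "x \<in> {0..1}" "y \<in> {0..1}" "\<psi> x = \<delta>" "\<psi> y = \<delta>" for x y
  proof (rule ccontr)
    assume "x \<noteq> y"
    have posz: "z > 0" if "z \<in> {0..1}" "\<psi> z = \<delta>" for z
    proof -
      have "z \<noteq> 0" using that(2) psi0 d(1) by auto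
      then show ?thesis using that(1) by simp
    qed
    have key: False if "a < b" "a \<in> {0..1}" "b \<in> {0..1}" "\<psi> a = \<delta>" "\<psi> b = \<delta>" for a b
    proof -
      have ap: "a > 0" using posz that by blast
      have bp: "b > 0" using ap that by simp
      have "\<psi> a / sqrt a \<le> \<psi> b / sqrt b" by (rule gmono) (use ap that in auto)
      then have "\<psi> a \<le> (\<psi> b / sqrt b) * sqrt a" using ap by (simp add: pos_divide_le_eq)
      also have "\<dots> < (\<psi> b / sqrt b) * sqrt b" using that ap bp d by (intro mult_strict_left_mono) auto
      also have "\<dots> = \<psi> b" using bp by simp
      finally show False using that by simp
    qed
    have "x < y \<or> y < x" using \<open>x \<noteq> y\<close> by linarith
    then show False using key[of x y] key[of y x] that by blast
  qed
  note P = psi_inv_prop[OF cont psi0 d U]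
  then show ?thesis by blast
qed

lemma halv1: "0 < x \<Longrightarrow> x \<le> 1/K \<Longrightarrow> \<psi> (K * x) / (K * x) \<le> 1/2 * (\<psi> x / x)"
  using halv by auto

lemma halv3:
  assumes y: "0 < y" "y \<le> 1"
  shows "8 * (\<psi> y / y) \<le> \<psi> (y / K^3) / (y / K^3)"
proof -
  have Kp: "K > 0" using K1 by simp
  have yk: "y / K \<le> 1 / K" using y Kp by (simp add: divide_right_mono)
  have le1: "y / K^2 \<le> y / K" using y K1 by (simp add: frac_le power2_eq_square)
  have le2: "y / K^3 \<le> y / K^2" using y K1 by (simp add: frac_le power3_eq_cube power2_eq_square)
  have h1: "\<psi> (K * (y / K)) / (K * (y / K)) \<le> 1/2 * (\<psi> (y/K) / (y/K))"
    by (rule halv1) (use y Kp yk in auto)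
  have h2: "\<psi> (K * (y / K^2)) / (K * (y / K^2)) \<le> 1/2 * (\<psi> (y/K^2) / (y/K^2))"
    by (rule halv1) (use y Kp yk le1 in auto)
  have h3: "\<psi> (K * (y / K^3)) / (K * (y / K^3)) \<le> 1/2 * (\<psi> (y/K^3) / (y/K^3))"
    by (rule halv1) (use y Kp yk le1 le2 in auto)
  have e1: "K * (y / K) = y" using Kp by simp
  have e2: "K * (y / K^2) = y / K" using Kp by (simp add: power2_eq_square)
  have e3: "K * (y / K^3) = y / K^2" using Kp by (simp add: power3_eq_cube power2_eq_square)
  show ?thesis using h1 h2 h3 unfolding e1 e2 e3 by linarith
qed

lemma lowerbound:
  assumes A: "adm \<psi> \<delta> (xN, xT) r \<phi>" and d: "0 < \<delta>" "\<delta> \<le> \<psi> 1"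
    and np: "norm xN > 0" and mp: "norm xT > 0"
    and y: "0 < y" "y \<le> 1" "8 * (norm xT / norm xN) * (\<psi> y / y) = 1"
  shows "1 / (8 + 16 * K) * min (sqrt (psi_inv \<psi> \<delta>) / \<delta>) (8 * (norm xT / norm xN) / sqrt y) * norm xN \<le> 1 / r"
proof -
  define x where "x = psi_inv \<psi> \<delta>"
  have x: "0 < x" "x \<le> 1" "\<psi> x = \<delta>" using inv[OF d] by (auto simp: x_def)
  define q where "q = sqrt x"
  have q: "0 < q" "q \<le> 1" "q * q = x" using x by (auto simp: q_def)
  define n where "n = norm xN"
  define m where "m = norm xT"
  define t where "t = m / n"
  define w where "w = sqrt y"
  have w: "0 < w" "w * w = y" using y by (auto simp: w_def)
  have n0: "n > 0" and m0: "m > 0" using np mp by (auto simp: n_def m_def)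
  have tp: "t > 0" using n0 m0 by (simp add: t_def)
  have rp: "r > 0" using A by (simp add: adm_def)
  define P where "P = \<psi> y / y"
  have tP: "8 * t * P = 1" using y(3) by (simp only: P_def t_def m_def n_def)
  define b where "b = r * m"
  have b0: "b > 0" using rp m0 by (simp add: b_def)
  have b1: "b \<le> 1" using adm_L1[OF A] by (simp add: b_def m_def)
  have rnb: "r * n = b / t" using m0 n0 by (simp add: b_def t_def)
  have Kp: "K > 0" using K1 by simp
  have L2: "r * n \<le> 2 * (\<psi> (\<rho> * (\<rho> + b)) + \<delta>) / \<rho>" if "0 < \<rho>" "\<rho> < 1" "\<rho> * (\<rho> + b) \<le> 1" for \<rho>
  proof -
    have "\<rho> * (\<rho> + r * norm xT) \<le> 1" using that(3) by (simp add: b_def m_def)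
    from adm_L2[OF A mono that(1) that(2) this] show ?thesis by (simp add: b_def m_def n_def)
  qed
  have cases: "r * n \<le> 8 * \<delta> / q \<or> r * n \<le> 2 * K * w / t"
  proof (cases "b \<le> q / 2")
    case True
    define \<rho> where "\<rho> = q / 2"
    have rho: "0 < \<rho>" "\<rho> < 1" using q by (auto simp: \<rho>_def)
    have Y: "\<rho> * (\<rho> + b) \<le> x"
    proof -
      have "\<rho> * (\<rho> + b) \<le> \<rho> * (\<rho> + q / 2)" using True rho by (intro mult_left_mono) auto
      also have "\<dots> = x / 2" using q by (simp add: \<rho>_def field_simps flip: q(3))
      finally show ?thesis using x by simp
    qed
    have Y0: "0 \<le> \<rho> * (\<rho> + b)" using rho b0 by simp
    have "\<psi> (\<rho> * (\<rho> + b)) \<le> \<psi> x" by (rule mono[OF Y0 Y x(2)])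
    then have "2 * (\<psi> (\<rho> * (\<rho> + b)) + \<delta>) / \<rho> \<le> 2 * (\<delta> + \<delta>) / \<rho>"
      using x rho by (intro divide_right_mono) auto
    moreover have "r * n \<le> 2 * (\<psi> (\<rho> * (\<rho> + b)) + \<delta>) / \<rho>" using L2[OF rho] Y x by simp
    ultimately have "r * n \<le> 2 * (\<delta> + \<delta>) / \<rho>" by linarith
    also have "\<dots> = 8 * \<delta> / q" using q by (simp add: \<rho>_def)
    finally show ?thesis by simp
  next
    case False
    define \<rho> where "\<rho> = b / 2"
    have rho: "0 < \<rho>" "\<rho> < 1" using b0 b1 by (auto simp: \<rho>_def)
    define X where "X = \<rho> * (\<rho> + b)"
    have Xe: "X = 3 * b * b / 4" by (simp add: X_def \<rho>_def field_simps)
    have X1: "X \<le> 3/4"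
    proof -
      have "b * b \<le> 1" using b0 b1 by (simp add: mult_le_one)
      then show ?thesis by (simp add: Xe)
    qed
    have Xp: "X > 0" using b0 by (simp add: Xe)
    have Xq: "X > 3 * x / 16"
    proof -
      have "q / 2 < b" using False by simp
      then have "(q/2) * (q/2) < b * b" using q by (intro mult_strict_mono) auto
      then show ?thesis by (simp add: Xe flip: q(3))
    qed
    have dX: "\<delta> \<le> 16 / 3 * \<psi> X"
    proof (cases "x \<le> X")
      case True
      then have "\<psi> x \<le> \<psi> X" using X1 x by (intro mono) auto
      then show ?thesis using x d by simp
    next
      case False
      have "\<psi> x / x \<le> \<psi> X / X" by (rule qanti) (use Xp False x in auto)
      then have "\<delta> / x * X \<le> \<psi> X" using Xp x by (simp add: pos_le_divide_eq)
      moreover have "\<delta> / x * X \<ge> \<delta> / x * (3 * x / 16)" using Xq x d by (intro mult_left_mono) auto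
      moreover have "\<delta> / x * (3 * x / 16) = 3 / 16 * \<delta>" using x by simp
      ultimately show ?thesis by linarith
    qed
    have "r * n \<le> 2 * (\<psi> X + \<delta>) / \<rho>" using L2[OF rho] X1 by (simp add: X_def)
    also have "\<dots> \<le> 2 * (\<psi> X + 16 / 3 * \<psi> X) / \<rho>" using dX rho by (intro divide_right_mono) auto
    also have "\<dots> = 76 / 3 * \<psi> X / b" by (simp add: \<rho>_def field_simps)
    finally have "b / t \<le> 76 / 3 * \<psi> X / b" using rnb by simp
    then have bb: "b * b \<le> 76 / 3 * \<psi> X * t" using b0 tp by (simp add: field_simps)
    define Z where "Z = \<psi> X / X"
    have psiX: "\<psi> X = X * Z" using Xp by (simp add: Z_def)
    have "b * b \<le> 76 / 3 * (X * Z) * t" using bb psiX by simp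
    moreover have "76 / 3 * (X * Z) * t = b * b * (19 * t * Z)" by (simp add: Xe field_simps)
    ultimately have "b * b * 1 \<le> b * b * (19 * t * Z)" by linarith
    then have key: "1 \<le> 19 * t * Z" using b0 by (simp only: mult_le_cancel_left_pos[OF mult_pos_pos[OF b0 b0]])
    have "X < K^2 * y"
    proof (rule ccontr)
      assume "\<not> X < K^2 * y"
      then have big: "K^2 * y \<le> X" by simp
      have Ky1: "K * y \<le> 1 / K"
      proof -
        have "K * (K * y) \<le> 1" using big X1 by (simp add: power2_eq_square)
        then show ?thesis using Kp by (simp add: field_simps)
      qed
      have y1: "y \<le> 1 / K"
      proof -
        have "y \<le> K * y" using K1 y by simp
        moreover have "1 / K \<le> 1" using K1 by simp
        ultimately show ?thesis using Ky1 by linarith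
      qed
      have h1: "\<psi> (K * y) / (K * y) \<le> 1/2 * P" using halv1[OF y(1) y1] by (simp add: P_def)
      have h2: "\<psi> (K * (K * y)) / (K * (K * y)) \<le> 1/2 * (\<psi> (K * y) / (K * y))"
        by (rule halv1) (use Kp y Ky1 in auto)
      have h3: "\<psi> X / X \<le> \<psi> (K * (K * y)) / (K * (K * y))"
        by (rule qanti) (use Kp y big X1 in \<open>auto simp: power2_eq_square mult.assoc\<close>)
      have "Z \<le> P / 4" using h1 h2 h3 unfolding Z_def by linarith
      then have "19 * t * Z \<le> 19 * t * (P / 4)" using tp by (intro mult_left_mono) auto
      also have "\<dots> = 19 / 32" using tP by (simp add: field_simps)
      finally have "19 * t * Z \<le> 19 / 32" .
      then show False using key by linarith
    qed
    then have "3 * b * b / 4 < K^2 * y" by (simp add: Xe)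
    moreover have "K^2 * y = K * K * y" by (simp add: power2_eq_square)
    moreover have "K * K * y \<ge> 0" using Kp y by simp
    ultimately have "b * b < 4 * (K * K * y)" by linarith
    moreover have "(2 * K * w) * (2 * K * w) = 4 * (K * K * y)" unfolding w(2)[symmetric] by (simp add: algebra_simps)
    ultimately have "b * b < (2 * K * w) * (2 * K * w)" by linarith
    then have "b < 2 * K * w"
    proof -
      assume lt: "b * b < (2 * K * w) * (2 * K * w)"
      show ?thesis
      proof (rule ccontr)
        assume "\<not> b < 2 * K * w"
        then have "(2 * K * w) * (2 * K * w) \<le> b * b" using Kp w b0 by (intro mult_mono) auto
        then show False using lt by linarith
      qed
    qed
    then have "r * n < 2 * K * w / t" using rnb tp by (simp add: divide_strict_right_mono)
    then show ?thesis by simp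
  qed
  define F where "F = min (q / \<delta>) (8 * t / w)"
  have F0: "F \<ge> 0" using q d tp w by (simp add: F_def)
  have cK: "1 / (8 + 16 * K) * F * n \<le> 1 / r"
    using cases
  proof
    assume h: "r * n \<le> 8 * \<delta> / q"
    have "1 / (8 + 16 * K) * F * n \<le> 1 / 8 * (q / \<delta>) * n"
      using F0 n0 Kp by (intro mult_right_mono mult_mono) (auto simp: F_def field_simps)
    also have "\<dots> \<le> 1 / r" using h rp q d n0 by (simp add: field_simps)
    finally show ?thesis .
  next
    assume h: "r * n \<le> 2 * K * w / t"
    have "1 / (8 + 16 * K) * F * n \<le> 1 / (16 * K) * (8 * t / w) * n"
      using F0 n0 Kp by (intro mult_right_mono mult_mono) (auto simp: F_def field_simps)
    also have "\<dots> \<le> 1 / r" using h rp tp w n0 Kp by (simp add: field_simps)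
    finally show ?thesis .
  qed
  then show ?thesis by (simp add: F_def q_def x_def t_def w_def n_def m_def)
qed

lemma sqrt_half_ge: "0 \<le> v \<Longrightarrow> v / 2 \<le> sqrt (v * v / 2)"
proof -
  assume v: "0 \<le> v"
  have "(v/2) * (v/2) \<le> v * v / 2" using v by (simp add: field_simps)
  then have "sqrt ((v/2) * (v/2)) \<le> sqrt (v * v / 2)" by (rule real_sqrt_le_mono)
  moreover have "sqrt ((v/2) * (v/2)) = v / 2" using v by (simp only: real_sqrt_abs2)
  ultimately show ?thesis by linarith
qed

lemma upperA:
  assumes c1: "0 < c1" "c1 \<le> 1/2" "c1 * \<psi> 1 < (1 - \<delta>0) / 2"
    and d: "0 < \<delta>" "\<delta> \<le> \<psi> 1" "\<delta> \<le> \<delta>0" and np: "norm xN > 0" and mn: "norm xT \<le> norm xN"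
  shows "\<exists>\<phi>. adm \<psi> \<delta> (xN, xT) (c1 * \<delta> / (sqrt (psi_inv \<psi> \<delta>) * norm xN)) \<phi>"
proof -
  define x where "x = psi_inv \<psi> \<delta>"
  have x: "0 < x" "x \<le> 1" "\<psi> x = \<delta>" using inv[OF d(1,2)] by (auto simp: x_def)
  define q where "q = sqrt x"
  have q: "0 < q" "q \<le> 1" "q * q = x" using x by (auto simp: q_def)
  define n where "n = norm xN"
  define m where "m = norm xT"
  have n0: "n > 0" and m0: "m \<ge> 0" and mn': "m \<le> n" using np mn by (auto simp: n_def m_def)
  define r where "r = c1 * \<delta> / (q * n)"
  have rp: "r > 0" using c1 d q n0 by (simp add: r_def)
  have rn: "r * n = c1 * (\<delta> / q)" using n0 by (simp add: r_def)
  have gx: "\<psi> x / sqrt x = \<delta> / q" using x by (simp add: q_def)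
  have dq: "\<delta> / q \<le> \<psi> 1" using gbound[OF x(1,2)] gx by simp
  have rnb: "r * n < (1 - \<delta>0) / 2"
  proof -
    have "r * n \<le> c1 * \<psi> 1" unfolding rn using dq c1 by (intro mult_left_mono) auto
    then show ?thesis using c1 by linarith
  qed
  have rm: "r * m \<le> r * n" using mn' rp by (intro mult_left_mono) auto
  have "\<exists>\<phi>. adm \<psi> \<delta> (xN, xT) r \<phi>"
  proof (rule map_adm[OF nn mono d(1) rp, where sq="1/2"])
    show "(0::real) < 1/2" by simp
    show "\<delta> + r * norm xN < 1" using rnb d d0 by (simp add: n_def)
    show "r * norm xT + 1/2 \<le> 1" using rm rnb d0 by (simp add: m_def n_def)
    fix v :: real assume v: "0 < v" "v < 1"
    define X where "X = v * (r * m + 1/2 * v)"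
    have X1: "v * v / 2 \<le> X" using v rp m0 by (simp add: X_def algebra_simps)
    have X2: "X \<le> 1"
    proof -
      have "X \<le> 1 * (r * m + 1/2 * 1)" unfolding X_def using v rp m0 by (intro mult_mono add_left_mono) auto
      then show ?thesis using rm rnb d0 by simp
    qed
    have rnv: "r * n * v = c1 * (\<delta> / q) * v" using rn by simp
    have "r * n * v - \<delta> < \<psi> X"
    proof (cases "v * v / 2 \<ge> x")
      case True
      have vv0: "0 < v * v / 2" using v by simp
      have "\<psi> (v * v / 2) \<le> \<psi> X" by (rule mono) (use X1 X2 vv0 in auto)
      moreover have "\<psi> (v * v / 2) = (\<psi> (v * v / 2) / sqrt (v * v / 2)) * sqrt (v * v / 2)"
        by (rule psi_eq_g[OF vv0])
      moreover have "\<psi> x / sqrt x \<le> \<psi> (v * v / 2) / sqrt (v * v / 2)"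
        by (rule gmono) (use x True X1 X2 in auto)
      moreover have "v / 2 \<le> sqrt (v * v / 2)" using v by (intro sqrt_half_ge) auto
      ultimately have "(\<delta> / q) * (v / 2) \<le> \<psi> X" using gx q d v
        by (smt (verit, best) divide_nonneg_pos mult_mono)
      moreover have "c1 * (\<delta> / q) * v \<le> (\<delta> / q) * (v / 2)"
      proof -
        have "c1 * ((\<delta> / q) * v) \<le> 1/2 * ((\<delta> / q) * v)" using c1 d q v by (intro mult_right_mono) auto
        then show ?thesis by simp
      qed
      ultimately show ?thesis using rnv d by linarith
    next
      case False
      then have "v * v < 2 * (q * q)" using q by simp
      have "v < 2 * q"
      proof (rule ccontr)
        assume "\<not> v < 2 * q"
        then have "(2 * q) * (2 * q) \<le> v * v" using q by (intro mult_mono) auto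
        then have "4 * (q * q) \<le> v * v" by (simp add: algebra_simps)
        moreover have "q * q > 0" using q(1) by simp
        ultimately show False using \<open>v * v < 2 * (q * q)\<close> by linarith
      qed
      then have "c1 * (\<delta> / q) * v < c1 * (\<delta> / q) * (2 * q)" using c1 d q by (intro mult_strict_left_mono) auto
      also have "\<dots> = 2 * c1 * \<delta>" using q by simp
      also have "\<dots> \<le> \<delta>" using c1 d by simp
      finally have neg: "r * n * v - \<delta> < 0" using rnv by simp
      have "0 \<le> v * v / 2" by simp
      then have "0 \<le> X" using X1 by linarith
      then have "\<psi> X \<ge> 0" using X2 by (intro nn) auto
      then show ?thesis using neg by linarith
    qed
    moreover have "\<psi> (v * (r * norm xT + 1/2 * v)) = \<psi> X" by (simp only: X_def m_def)
    ultimately show "r * norm xN * v - \<delta> < \<psi> (v * (r * norm xT + 1/2 * v))" by (simp only: n_def)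
  qed
  then show ?thesis by (simp add: r_def q_def x_def n_def)
qed

lemma upperB:
  assumes c2: "0 < c2" "c2 \<le> 1 / (2 * K^2)" "c2 * (8 * \<psi> 1) < (1 - \<delta>0) / 2"
    and d: "0 < \<delta>" "\<delta> \<le> \<delta>0" and np: "norm xN > 0" and mp: "norm xT > 0"
    and y: "0 < y" "y \<le> 1" "8 * (norm xT / norm xN) * (\<psi> y / y) = 1"
  shows "\<exists>\<phi>. adm \<psi> \<delta> (xN, xT) (c2 * sqrt y / norm xT) \<phi>"
proof -
  define n where "n = norm xN"
  define m where "m = norm xT"
  have n0: "n > 0" and m0: "m > 0" using np mp by (auto simp: n_def m_def)
  define t where "t = m / n"
  have tp: "t > 0" using n0 m0 by (simp add: t_def)
  define P where "P = \<psi> y / y"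
  have tP: "8 * t * P = 1" using y(3) by (simp only: P_def t_def m_def n_def)
  define w where "w = sqrt y"
  have w: "0 < w" "w \<le> 1" "w * w = y" using y by (auto simp: w_def)
  have Kp: "K > 0" using K1 by simp
  define r where "r = c2 * w / m"
  have rp: "r > 0" using c2 w m0 by (simp add: r_def)
  define a where "a = c2 * w"
  have ap: "a > 0" using c2 w by (simp add: a_def)
  have rm: "r * m = a" using m0 by (simp add: r_def a_def)
  have rn: "r * n = a / t" using m0 n0 by (simp add: r_def a_def t_def)
  have K2: "1 / (2 * K^2) \<le> 1/2"
  proof -
    have "1 \<le> K^2" using K1 by (simp add: one_le_power)
    then have "1 / K^2 \<le> 1 / 1" by (intro divide_left_mono) auto
    then show ?thesis by simp
  qed
  have a_le: "a \<le> 1/2"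
  proof -
    have "a \<le> c2" using c2 w by (simp add: a_def mult_left_le)
    then show ?thesis using c2 K2 by linarith
  qed
  have wt: "w / t = 8 * (\<psi> y / sqrt y)"
  proof -
    have "1 / t = 8 * P" using tP tp by (simp add: field_simps)
    moreover have "w / t = w * (1 / t)" by simp
    ultimately have "w / t = w * (8 * P)" by simp
    also have "\<dots> = 8 * (\<psi> y / (w * w) * w)" by (simp add: P_def w(3))
    also have "\<dots> = 8 * (\<psi> y / w)" using w(1) by (simp add: field_simps)
    finally show ?thesis by (simp add: w_def)
  qed
  have rnb: "r * n < (1 - \<delta>0) / 2"
  proof -
    have "r * n = c2 * (w / t)" by (simp add: rn a_def)
    also have "\<dots> \<le> c2 * (8 * \<psi> 1)" unfolding wt using gbound[OF y(1,2)] c2 by (intro mult_left_mono) auto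
    finally show ?thesis using c2 by linarith
  qed
  define y3 where "y3 = y / K^3"
  have y3: "0 < y3" "y3 \<le> y"
  proof -
    show "0 < y3" using y Kp by (simp add: y3_def)
    have "1 \<le> K^3" using K1 by (simp add: one_le_power)
    then have "y / K^3 \<le> y / 1" using y(1) Kp by (intro divide_left_mono) auto
    then show "y3 \<le> y" by (simp add: y3_def)
  qed
  have P3: "1 / t \<le> \<psi> y3 / y3"
  proof -
    have "8 * P \<le> \<psi> y3 / y3" using halv3[OF y(1,2)] by (simp add: P_def y3_def)
    moreover have "1 / t = 8 * P" using tP tp by (simp add: field_simps)
    ultimately show ?thesis by simp
  qed
  have sy3: "w / K^2 \<le> sqrt y3"
  proof -
    have "y / K^4 \<le> y3"
    proof -
      have "K^3 \<le> K^4" using K1 by (simp add: power_increasing)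
      then show ?thesis using y Kp by (simp add: y3_def frac_le)
    qed
    moreover have "(w / K^2) * (w / K^2) = y / K^4" using w by (simp add: power2_eq_square power4_eq_xxxx field_simps flip: w(3))
    ultimately have "sqrt ((w / K^2) * (w / K^2)) \<le> sqrt y3" by (intro real_sqrt_le_mono) linarith
    moreover have "sqrt ((w / K^2) * (w / K^2)) = \<bar>w / K^2\<bar>" by (rule real_sqrt_abs2)
    moreover have "\<bar>w / K^2\<bar> = w / K^2" using w Kp by simp
    ultimately show ?thesis by linarith
  qed
  have "\<exists>\<phi>. adm \<psi> \<delta> (xN, xT) r \<phi>"
  proof (rule map_adm[OF nn mono d(1) rp, where sq="1/2"])
    show "(0::real) < 1/2" by simp
    show "\<delta> + r * norm xN < 1" using rnb d d0 by (simp add: n_def)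
    show "r * norm xT + 1/2 \<le> 1" using rm a_le by (simp add: m_def)
    fix v :: real assume v: "0 < v" "v < 1"
    define X where "X = v * (a + 1/2 * v)"
    have Xva: "v * a \<le> X" using v by (simp add: X_def algebra_simps)
    have X1: "v * v / 2 \<le> X" using v ap by (simp add: X_def algebra_simps)
    have Xp: "0 < X" using v ap by (simp add: X_def)
    have Xl1: "X < 1"
    proof -
      have "v * (a + 1/2 * v) < 1 * (a + 1/2 * v)" using v ap by (intro mult_strict_right_mono) auto
      then have "v * (a + 1/2 * v) < a + 1/2 * v" by simp
      moreover have "a + 1/2 * v < a + 1/2" using v by simp
      ultimately show ?thesis using a_le unfolding X_def by linarith
    qed
    have goal: "r * n * v \<le> \<psi> X"
    proof (cases "X \<le> y3")
      case True
      have "\<psi> y3 / y3 \<le> \<psi> X / X" by (rule qanti) (use Xp True y3 y in auto)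
      then have "1 / t \<le> \<psi> X / X" using P3 by linarith
      then have "X * (1 / t) \<le> X * (\<psi> X / X)" using Xp by (intro mult_left_mono) auto
      then have "X / t \<le> \<psi> X" using Xp by simp
      moreover have "v * a / t \<le> X / t" using Xva tp by (intro divide_right_mono) auto
      moreover have "r * n * v = v * a / t" using rn by simp
      ultimately show ?thesis by linarith
    next
      case False
      have gX: "\<psi> y3 / sqrt y3 \<le> \<psi> X / sqrt X" by (rule gmono) (use False y3 Xl1 in auto)
      have g3: "\<psi> y3 / sqrt y3 = (\<psi> y3 / y3) * sqrt y3"
      proof -
        define s3 where "s3 = sqrt y3"
        have s3: "s3 > 0" "s3 * s3 = y3" using y3 by (auto simp: s3_def)
        have "\<psi> y3 / s3 = (\<psi> y3 / (s3 * s3)) * s3" using s3(1) by (simp add: field_simps)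
        then show ?thesis by (simp only: s3_def[symmetric] s3(2))
      qed
      have sX: "v / 2 \<le> sqrt X"
      proof -
        have "v / 2 \<le> sqrt (v * v / 2)" using v by (intro sqrt_half_ge) auto
        also have "\<dots> \<le> sqrt X" using X1 by (rule real_sqrt_le_mono)
        finally show ?thesis .
      qed
      have "0 < 1 / t" using tp by simp
      then have p3nn: "0 \<le> \<psi> y3 / y3" using P3 by linarith
      have "(1 / t) * (w / K^2) \<le> (\<psi> y3 / y3) * sqrt y3"
        using P3 sy3 tp w Kp p3nn by (intro mult_mono) auto
      then have "(1 / t) * (w / K^2) \<le> \<psi> X / sqrt X" using gX g3 by linarith
      moreover have gXnn: "0 \<le> \<psi> X / sqrt X" using nn[of X] Xp Xl1 by simp
      ultimately have "(1 / t) * (w / K^2) * (v / 2) \<le> (\<psi> X / sqrt X) * sqrt X"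
        using sX tp w Kp v by (intro mult_mono) auto
      then have A1: "(1 / t) * (w / K^2) * (v / 2) \<le> \<psi> X" using Xp by simp
      have "r * n * v = c2 * w * v / t" using rn by (simp add: a_def)
      also have "\<dots> \<le> (1 / (2 * K^2)) * w * v / t" using c2 w v tp by (intro divide_right_mono mult_right_mono) auto
      also have "\<dots> = (1 / t) * (w / K^2) * (v / 2)" by (simp add: field_simps)
      finally show ?thesis using A1 by linarith
    qed
    have "\<psi> (v * (r * norm xT + 1/2 * v)) = \<psi> X" by (simp only: X_def rm m_def[symmetric])
    moreover have "r * norm xN * v = r * n * v" by (simp add: n_def)
    ultimately show "r * norm xN * v - \<delta> < \<psi> (v * (r * norm xT + 1/2 * v))" using goal d by linarith
  qed
  then show ?thesis by (simp add: r_def w_def m_def)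
qed

lemma main:
  "\<exists>c C. 0 < c \<and> c < C \<and>
          (\<forall>\<delta> xN xT. 0 < \<delta> \<and> \<delta> \<le> \<delta>0 \<and> \<delta> \<le> \<psi> 1 \<and> xN \<noteq> 0 \<and> norm xT \<le> norm xN \<and>
             (\<exists>!s. s \<in> {0<..1} \<and> \<psi> s / s = 1 / (8 * (norm xT / norm xN)))
           \<longrightarrow> c * F3 \<psi> \<delta> (norm xT / norm xN) * norm xN \<le> kobayashi (Gpsi \<psi>) (pdelta \<delta>) (xN, xT)
             \<and> kobayashi (Gpsi \<psi>) (pdelta \<delta>) (xN, xT) \<le> C * F3 \<psi> \<delta> (norm xT / norm xN) * norm xN)"
proof -
  have Kp: "K > 0" using K1 by simp
  define c1 where "c1 = min (1/2) ((1 - \<delta>0) / (2 * \<psi> 1 + 1))"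
  have c1p: "c1 > 0" using d0 psi1 by (simp add: c1_def)
  have c1h: "c1 \<le> 1/2" unfolding c1_def by (rule min.cobounded1)
  have c1b: "c1 * \<psi> 1 < (1 - \<delta>0) / 2"
  proof -
    have "c1 * \<psi> 1 \<le> (1 - \<delta>0) / (2 * \<psi> 1 + 1) * \<psi> 1"
      using psi1 by (intro mult_right_mono) (auto simp: c1_def)
    also have "\<dots> < (1 - \<delta>0) / 2" using psi1 d0 by (simp add: field_simps)
    finally show ?thesis .
  qed
  define c2 where "c2 = min (1 / (2 * K^2)) ((1 - \<delta>0) / (16 * \<psi> 1 + 1))"
  have c2p: "c2 > 0" using d0 psi1 Kp by (simp add: c2_def)
  have c2h: "c2 \<le> 1 / (2 * K^2)" unfolding c2_def by (rule min.cobounded1)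
  have c2b: "c2 * (8 * \<psi> 1) < (1 - \<delta>0) / 2"
  proof -
    have "c2 * (8 * \<psi> 1) \<le> (1 - \<delta>0) / (16 * \<psi> 1 + 1) * (8 * \<psi> 1)"
      using psi1 by (intro mult_right_mono) (auto simp: c2_def)
    also have "\<dots> < (1 - \<delta>0) / 2" using psi1 d0 by (simp add: field_simps)
    finally show ?thesis .
  qed
  define c where "c = 1 / (8 + 16 * K)"
  have cp: "c > 0" using Kp by (simp add: c_def)
  define Cu where "Cu = max (1 / c1) (1 / (8 * c2))"
  have Cup: "Cu > 0" using c1p by (simp add: Cu_def less_max_iff_disj)
  show ?thesis
  proof (rule exI[of _ c], rule exI[of _ "Cu + c"], intro conjI allI impI)
    show "0 < c" by (rule cp)
    show "c < Cu + c" using Cup by simp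
    fix \<delta> :: real and xN xT :: complex
    assume H: "0 < \<delta> \<and> \<delta> \<le> \<delta>0 \<and> \<delta> \<le> \<psi> 1 \<and> xN \<noteq> 0 \<and> norm xT \<le> norm xN \<and>
             (\<exists>!s. s \<in> {0<..1} \<and> \<psi> s / s = 1 / (8 * (norm xT / norm xN)))"
    then have d: "0 < \<delta>" "\<delta> \<le> \<delta>0" "\<delta> \<le> \<psi> 1" and np: "norm xN > 0" and mn: "norm xT \<le> norm xN"
      and ex1: "\<exists>!s. s \<in> {0<..1} \<and> \<psi> s / s = 1 / (8 * (norm xT / norm xN))" by auto
    define n where "n = norm xN"
    define m where "m = norm xT"
    define t where "t = m / n"
    obtain y where Py: "y \<in> {0<..1} \<and> \<psi> y / y = 1 / (8 * (norm xT / norm xN))" using ex1 by blast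
    have y: "0 < y" "y \<le> 1" using Py by auto
    have inv1: "psi1_inv \<psi> (1 / (8 * (norm xT / norm xN))) = y"
      unfolding psi1_inv_def by (rule the1_equality[OF ex1 Py])
    have Pp: "\<psi> y / y > 0" using pos[OF y] y by simp
    have mp: "norm xT > 0"
    proof (rule ccontr)
      assume "\<not> norm xT > 0"
      then have "norm xT = 0" by simp
      then have "\<psi> y / y = 0" using Py y by auto
      then show False using Pp by linarith
    qed
    have tp: "t > 0" using mp np by (simp add: t_def m_def n_def)
    have e: "\<psi> y / y = 1 / (8 * (norm xT / norm xN))" using Py by blast
    have nz: "8 * (norm xT / norm xN) \<noteq> 0" using np mp by simp
    have y3: "8 * (norm xT / norm xN) * (\<psi> y / y) = 1"
      unfolding e using nz by simp
    define x where "x = psi_inv \<psi> \<delta>"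
    have x: "0 < x" "x \<le> 1" "\<psi> x = \<delta>" using inv[OF d(1) d(3)] by (auto simp: x_def)
    define q where "q = sqrt x"
    have q: "q > 0" using x by (simp add: q_def)
    define w where "w = sqrt y"
    have w: "w > 0" using y by (simp add: w_def)
    have F3e: "F3 \<psi> \<delta> (norm xT / norm xN) = min (q / \<delta>) (8 * t / w)"
      unfolding F3_def inv1 by (simp only: q_def x_def w_def t_def m_def n_def)
    define F where "F = min (q / \<delta>) (8 * t / w)"
    have F0: "F \<ge> 0" using q d tp w by (simp add: F_def)
    obtain \<phi>A where phA: "adm \<psi> \<delta> (xN, xT) (c1 * \<delta> / (sqrt (psi_inv \<psi> \<delta>) * norm xN)) \<phi>A"
      using upperA[OF c1p c1h c1b d(1) d(3) d(2) np mn] by blast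
    obtain \<phi>B where phB: "adm \<psi> \<delta> (xN, xT) (c2 * sqrt y / norm xT) \<phi>B"
      using upperB[OF c2p c2h c2b d(1) d(2) np mp y y3] by blast
    have kA: "kobayashi (Gpsi \<psi>) (pdelta \<delta>) (xN, xT) \<le> 1 / c1 * (q / \<delta>) * n"
    proof -
      have "kobayashi (Gpsi \<psi>) (pdelta \<delta>) (xN, xT) \<le> 1 / (c1 * \<delta> / (sqrt (psi_inv \<psi> \<delta>) * norm xN))"
        by (rule kob_upper[OF phA])
      also have "\<dots> = 1 / c1 * (q / \<delta>) * n" using c1p d q np by (simp add: q_def x_def n_def field_simps)
      finally show ?thesis .
    qed
    have kB: "kobayashi (Gpsi \<psi>) (pdelta \<delta>) (xN, xT) \<le> 1 / (8 * c2) * (8 * t / w) * n"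
    proof -
      have "kobayashi (Gpsi \<psi>) (pdelta \<delta>) (xN, xT) \<le> 1 / (c2 * sqrt y / norm xT)"
        by (rule kob_upper[OF phB])
      also have "\<dots> = 1 / (8 * c2) * (8 * t / w) * n" using c2p w np mp by (simp add: w_def t_def m_def n_def field_simps)
      finally show ?thesis .
    qed
    have n0: "n > 0" using np by (simp add: n_def)
    have up: "kobayashi (Gpsi \<psi>) (pdelta \<delta>) (xN, xT) \<le> Cu * F * n"
    proof (cases "q / \<delta> \<le> 8 * t / w")
      case True
      then have "F = q / \<delta>" by (simp add: F_def)
      moreover have "1 / c1 * (q / \<delta>) * n \<le> Cu * (q / \<delta>) * n"
        using q d n0 by (intro mult_right_mono) (auto simp: Cu_def)
      ultimately show ?thesis using kA by simp
    next
      case False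
      then have "F = 8 * t / w" by (simp add: F_def)
      moreover have "1 / (8 * c2) * (8 * t / w) * n \<le> Cu * (8 * t / w) * n"
        using tp w n0 by (intro mult_right_mono) (auto simp: Cu_def)
      ultimately show ?thesis using kB by simp
    qed
    have lo: "c * F * n \<le> kobayashi (Gpsi \<psi>) (pdelta \<delta>) (xN, xT)"
    proof (rule kob_lower)
      show "\<exists>r \<phi>. adm \<psi> \<delta> (xN, xT) r \<phi>" using phA by blast
      fix r \<phi> assume A: "adm \<psi> \<delta> (xN, xT) r \<phi>"
      show "c * F * n \<le> 1 / r"
        using lowerbound[OF A d(1) d(3) np mp y y3] by (simp add: c_def F_def q_def x_def w_def t_def m_def n_def)
    qed
    have "Cu * F * n \<le> (Cu + c) * F * n" using cp F0 n0 by (intro mult_right_mono) auto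
    then show "kobayashi (Gpsi \<psi>) (pdelta \<delta>) (xN, xT) \<le> (Cu + c) * F3 \<psi> \<delta> (norm xT / norm xN) * norm xN"
      using up by (simp add: F3e F_def n_def)
    show "c * F3 \<psi> \<delta> (norm xT / norm xN) * norm xN \<le> kobayashi (Gpsi \<psi>) (pdelta \<delta>) (xN, xT)"
      using lo by (simp add: F3e F_def n_def)
  qed
qed

end

theorem theorem4:
  fixes \<psi> :: "real \<Rightarrow> real" and \<delta>0 :: real
  assumes cont: "continuous_on {0..1} \<psi>"
    and nonneg: "\<forall>x\<in>{0..1}. \<psi> x \<ge> 0"
    and psi0: "\<psi> 0 = 0"
    and psi1: "\<psi> 1 > 0"
    and d0: "0 < \<delta>0" "\<delta>0 < 1"
  shows
    "((mono_on {0<..<1} (\<lambda>x. \<psi> x / sqrt x) \<and>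
      antimono_on {0<..<1} (\<lambda>x. \<psi> x / x) \<and>
      (\<exists>K>1. \<forall>x\<in>{0<..1/K}. \<psi> (K * x) / (K * x) \<le> 1/2 * (\<psi> x / x)))
     \<longrightarrow> (\<exists>c C. 0 < c \<and> c < C \<and>
          (\<forall>\<delta> xN xT. 0 < \<delta> \<and> \<delta> \<le> \<delta>0 \<and> \<delta> \<le> \<psi> 1 \<and> xN \<noteq> 0 \<and> norm xT \<le> norm xN \<and>
             (\<exists>!s. s \<in> {0<..1} \<and> \<psi> s / s = 1 / (8 * (norm xT / norm xN)))
           \<longrightarrow> c * F3 \<psi> \<delta> (norm xT / norm xN) * norm xN \<le> kobayashi (Gpsi \<psi>) (pdelta \<delta>) (xN, xT)
             \<and> kobayashi (Gpsi \<psi>) (pdelta \<delta>) (xN, xT) \<le> C * F3 \<psi> \<delta> (norm xT / norm xN) * norm xN)))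
    \<and>
    (\<exists>c C. 0 < c \<and> c < C \<and>
       (\<forall>\<delta> xN xT. 0 < \<delta> \<and> \<delta> \<le> \<delta>0 \<longrightarrow>
          c * max ((norm xN - norm xT) / sqrt \<delta>) (norm xT) \<le> kobayashi (Gpsi (\<lambda>x. x)) (pdelta \<delta>) (xN, xT)
          \<and> kobayashi (Gpsi (\<lambda>x. x)) (pdelta \<delta>) (xN, xT) \<le> C * max ((norm xN - norm xT) / sqrt \<delta>) (norm xT)))
    \<and>
    (mono_on {0<..<1} (\<lambda>x. \<psi> x / x)
     \<longrightarrow> (\<exists>C>0. \<forall>\<delta> xN xT. 0 < \<delta> \<and> \<delta> < \<psi> 1 \<and> \<delta> \<le> \<delta>0 \<and>
            norm xT \<le> psi_inv \<psi> \<delta> / (8 * \<delta>) * norm xN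
          \<longrightarrow> 1 / (4 * sqrt 2) * (sqrt (psi_inv \<psi> \<delta>) / \<delta>) * norm xN \<le> kobayashi (Gpsi \<psi>) (pdelta \<delta>) (xN, xT)
            \<and> kobayashi (Gpsi \<psi>) (pdelta \<delta>) (xN, xT) \<le> C * (sqrt (psi_inv \<psi> \<delta>) / \<delta>) * norm xN))"
proof (intro conjI)
  show "(mono_on {0<..<1} (\<lambda>x. \<psi> x / sqrt x) \<and>
      antimono_on {0<..<1} (\<lambda>x. \<psi> x / x) \<and>
      (\<exists>K>1. \<forall>x\<in>{0<..1/K}. \<psi> (K * x) / (K * x) \<le> 1/2 * (\<psi> x / x)))
     \<longrightarrow> (\<exists>c C. 0 < c \<and> c < C \<and>
          (\<forall>\<delta> xN xT. 0 < \<delta> \<and> \<delta> \<le> \<delta>0 \<and> \<delta> \<le> \<psi> 1 \<and> xN \<noteq> 0 \<and> norm xT \<le> norm xN \<and>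
             (\<exists>!s. s \<in> {0<..1} \<and> \<psi> s / s = 1 / (8 * (norm xT / norm xN)))
           \<longrightarrow> c * F3 \<psi> \<delta> (norm xT / norm xN) * norm xN \<le> kobayashi (Gpsi \<psi>) (pdelta \<delta>) (xN, xT)
             \<and> kobayashi (Gpsi \<psi>) (pdelta \<delta>) (xN, xT) \<le> C * F3 \<psi> \<delta> (norm xT / norm xN) * norm xN))"
  proof
    assume H: "mono_on {0<..<1} (\<lambda>x. \<psi> x / sqrt x) \<and>
      antimono_on {0<..<1} (\<lambda>x. \<psi> x / x) \<and>
      (\<exists>K>1. \<forall>x\<in>{0<..1/K}. \<psi> (K * x) / (K * x) \<le> 1/2 * (\<psi> x / x))"
    then obtain K where K: "K > 1" "\<forall>x\<in>{0<..1/K}. \<psi> (K * x) / (K * x) \<le> 1/2 * (\<psi> x / x)" by blast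
    interpret p1 \<psi> \<delta>0 K
      by (unfold_locales) (use cont nonneg psi0 psi1 d0 H K in auto)
    show "\<exists>c C. 0 < c \<and> c < C \<and>
          (\<forall>\<delta> xN xT. 0 < \<delta> \<and> \<delta> \<le> \<delta>0 \<and> \<delta> \<le> \<psi> 1 \<and> xN \<noteq> 0 \<and> norm xT \<le> norm xN \<and>
             (\<exists>!s. s \<in> {0<..1} \<and> \<psi> s / s = 1 / (8 * (norm xT / norm xN)))
           \<longrightarrow> c * F3 \<psi> \<delta> (norm xT / norm xN) * norm xN \<le> kobayashi (Gpsi \<psi>) (pdelta \<delta>) (xN, xT)
             \<and> kobayashi (Gpsi \<psi>) (pdelta \<delta>) (xN, xT) \<le> C * F3 \<psi> \<delta> (norm xT / norm xN) * norm xN)"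
      by (rule main)
  qed
  show "\<exists>c C. 0 < c \<and> c < C \<and>
       (\<forall>\<delta> xN xT. 0 < \<delta> \<and> \<delta> \<le> \<delta>0 \<longrightarrow>
          c * max ((norm xN - norm xT) / sqrt \<delta>) (norm xT) \<le> kobayashi (Gpsi (\<lambda>x. x)) (pdelta \<delta>) (xN, xT)
          \<and> kobayashi (Gpsi (\<lambda>x. x)) (pdelta \<delta>) (xN, xT) \<le> C * max ((norm xN - norm xT) / sqrt \<delta>) (norm xT))"
    by (rule part2[OF d0])
  show "mono_on {0<..<1} (\<lambda>x. \<psi> x / x)
     \<longrightarrow> (\<exists>C>0. \<forall>\<delta> xN xT. 0 < \<delta> \<and> \<delta> < \<psi> 1 \<and> \<delta> \<le> \<delta>0 \<and>
            norm xT \<le> psi_inv \<psi> \<delta> / (8 * \<delta>) * norm xN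
          \<longrightarrow> 1 / (4 * sqrt 2) * (sqrt (psi_inv \<psi> \<delta>) / \<delta>) * norm xN \<le> kobayashi (Gpsi \<psi>) (pdelta \<delta>) (xN, xT)
            \<and> kobayashi (Gpsi \<psi>) (pdelta \<delta>) (xN, xT) \<le> C * (sqrt (psi_inv \<psi> \<delta>) / \<delta>) * norm xN)"
    using part3[OF cont nonneg psi0 psi1 d0] by blast
qed

end
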